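(* Let $\mathcal{C}$ be a deflation-exact category and $\mathcal{A}$ an admissibly deflation-percolating subcategory. (1) Consider a commutative diagram $$\begin{array}{ccccc} X&\rightarrowtail&Y&\twoheadrightarrow&Z\\ \downarrow{\scriptstyle f}&&\downarrow{\scriptstyle g}&&\downarrow{\scriptstyle h}\\ X'&\rightarrowtail&Y'&\twoheadrightarrow&Z'\end{array}$$ whose rows are conflations and where $f$ and $h$ are inflations. (a) If $f$ is an $\mathcal{A}^{-1}$-inflation, then $g$ is an inflation. (b) If additionally $h$ is an $\mathcal{A}^{-1}$-inflation, then $g$ is an $\mathcal{A}^{-1}$-inflation. (2) Consider a commutative diagram of the same shape whose rows are conflations and where $f$ and $h$ are deflations. (a) If $f$ is an $\mathcal{A}^{-1}$-deflation, then $g$ is a deflation. (b) If additionally $h$ is an $\mathcal{A}^{-1}$-deflation, then $g$ is an $\mathcal{A}^{-1}$-deflation.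
   Context: A conflation category is an additive category with a class of kernel-cokernel pairs (closed under isomorphisms) called conflations; first map an inflation, second a deflation. A deflation-exact category is a conflation category satisfying: (R0) $1_0$ is a deflation; (R1) composites of deflations are deflations; (R2) pullbacks of deflations along arbitrary morphisms exist and are deflations. A non-empty full subcategory $\mathcal{A}$ is admissibly deflation-percolating if: (A1) for every conflation $A'\rightarrowtail A\twoheadrightarrow A''$, $A\in\mathcal{A}$ iff $A',A''\in\mathcal{A}$; (A2) every morphism $C\to A$ with $A\in\mathcal{A}$ factors as a deflation $C\twoheadrightarrow A'$ followed by an inflation $A'\rightarrowtail A$ with $A'\in\mathcal{A}$; (A3) if $a\colon C\rightarrowtail D$ is an inflation and $b\colon C\twoheadrightarrow A$ a deflation with $A\in\mathcal{A}$, the pushout of $a$ along $b$ exists and yields a deflation $D\twoheadrightarrow P$ and an inflation $A\rightarrowtail P$. An $\mathcal{A}^{-1}$-inflation is an inflation with cokernel in $\mathcal{A}$; an $\mathcal{A}^{-1}$-deflation is a deflation with kernel in $\mathcal{A}$. *)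

theory Defs
  imports Main
begin

text \<open>A category with additive structure and a distinguished class of conflations.
  Morphisms carry source/target; composition cmp C g f means g after f.\<close>

record ('o,'m) ccat =
  obj :: "'o set"
  mor :: "'m set"
  src :: "'m \<Rightarrow> 'o"
  tgt :: "'m \<Rightarrow> 'o"
  ident :: "'o \<Rightarrow> 'm"
  cmp :: "'m \<Rightarrow> 'm \<Rightarrow> 'm"
  madd :: "'m \<Rightarrow> 'm \<Rightarrow> 'm"
  mzero :: "'o \<Rightarrow> 'o \<Rightarrow> 'm"
  mneg :: "'m \<Rightarrow> 'm"
  conflations :: "('m \<times> 'm) set"

definition hom :: "('o,'m) ccat \<Rightarrow> 'o \<Rightarrow> 'o \<Rightarrow> 'm set" where
  "hom C X Y = {f \<in> mor C. src C f = X \<and> tgt C f = Y}"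

definition category :: "('o,'m) ccat \<Rightarrow> bool" where
  "category C \<longleftrightarrow>
     (\<forall>f\<in>mor C. src C f \<in> obj C \<and> tgt C f \<in> obj C)
   \<and> (\<forall>X\<in>obj C. ident C X \<in> hom C X X)
   \<and> (\<forall>f g. f \<in> mor C \<longrightarrow> g \<in> mor C \<longrightarrow> tgt C f = src C g \<longrightarrow>
          cmp C g f \<in> hom C (src C f) (tgt C g))
   \<and> (\<forall>f g h. f \<in> mor C \<longrightarrow> g \<in> mor C \<longrightarrow> h \<in> mor C \<longrightarrow>
          tgt C f = src C g \<longrightarrow> tgt C g = src C h \<longrightarrow>
          cmp C h (cmp C g f) = cmp C (cmp C h g) f)
   \<and> (\<forall>f\<in>mor C. cmp C (ident C (tgt C f)) f = f \<and> cmp C f (ident C (src C f)) = f)"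

definition preadditive :: "('o,'m) ccat \<Rightarrow> bool" where
  "preadditive C \<longleftrightarrow> category C
   \<and> (\<forall>X\<in>obj C. \<forall>Y\<in>obj C.
        mzero C X Y \<in> hom C X Y
      \<and> (\<forall>f\<in>hom C X Y. \<forall>g\<in>hom C X Y. madd C f g \<in> hom C X Y \<and> madd C f g = madd C g f)
      \<and> (\<forall>f\<in>hom C X Y. \<forall>g\<in>hom C X Y. \<forall>h\<in>hom C X Y.
           madd C (madd C f g) h = madd C f (madd C g h))
      \<and> (\<forall>f\<in>hom C X Y. madd C f (mzero C X Y) = f
           \<and> mneg C f \<in> hom C X Y \<and> madd C f (mneg C f) = mzero C X Y))
   \<and> (\<forall>X\<in>obj C. \<forall>Y\<in>obj C. \<forall>W\<in>obj C. \<forall>f\<in>hom C X Y. \<forall>g\<in>hom C X Y.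
        (\<forall>h\<in>hom C Y W. cmp C h (madd C f g) = madd C (cmp C h f) (cmp C h g))
      \<and> (\<forall>k\<in>hom C W X. cmp C (madd C f g) k = madd C (cmp C f k) (cmp C g k)))"

definition zero_object :: "('o,'m) ccat \<Rightarrow> 'o \<Rightarrow> bool" where
  "zero_object C Z \<longleftrightarrow> Z \<in> obj C \<and>
     (\<forall>X\<in>obj C. (\<exists>!f. f \<in> hom C Z X) \<and> (\<exists>!f. f \<in> hom C X Z))"

definition biproduct :: "('o,'m) ccat \<Rightarrow> 'o \<Rightarrow> 'o \<Rightarrow> 'o \<Rightarrow> 'm \<Rightarrow> 'm \<Rightarrow> 'm \<Rightarrow> 'm \<Rightarrow> bool" where
  "biproduct C A B S p1 p2 i1 i2 \<longleftrightarrow> S \<in> obj C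
     \<and> p1 \<in> hom C S A \<and> p2 \<in> hom C S B \<and> i1 \<in> hom C A S \<and> i2 \<in> hom C B S
     \<and> cmp C p1 i1 = ident C A \<and> cmp C p2 i2 = ident C B
     \<and> cmp C p2 i1 = mzero C A B \<and> cmp C p1 i2 = mzero C B A
     \<and> madd C (cmp C i1 p1) (cmp C i2 p2) = ident C S"

definition additive :: "('o,'m) ccat \<Rightarrow> bool" where
  "additive C \<longleftrightarrow> preadditive C \<and> (\<exists>Z. zero_object C Z)
     \<and> (\<forall>A\<in>obj C. \<forall>B\<in>obj C. \<exists>S p1 p2 i1 i2. biproduct C A B S p1 p2 i1 i2)"

definition is_kernel :: "('o,'m) ccat \<Rightarrow> 'm \<Rightarrow> 'm \<Rightarrow> bool" where
  "is_kernel C i p \<longleftrightarrow> (\<exists>K Y Z. i \<in> hom C K Y \<and> p \<in> hom C Y Z \<and> cmp C p i = mzero C K Z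
     \<and> (\<forall>W t. W \<in> obj C \<longrightarrow> t \<in> hom C W Y \<longrightarrow> cmp C p t = mzero C W Z \<longrightarrow>
          (\<exists>!u. u \<in> hom C W K \<and> cmp C i u = t)))"

definition is_cokernel :: "('o,'m) ccat \<Rightarrow> 'm \<Rightarrow> 'm \<Rightarrow> bool" where
  "is_cokernel C p i \<longleftrightarrow> (\<exists>K Y Z. i \<in> hom C K Y \<and> p \<in> hom C Y Z \<and> cmp C p i = mzero C K Z
     \<and> (\<forall>W t. W \<in> obj C \<longrightarrow> t \<in> hom C Y W \<longrightarrow> cmp C t i = mzero C K W \<longrightarrow>
          (\<exists>!u. u \<in> hom C Z W \<and> cmp C u p = t)))"

definition kernel_cokernel_pair :: "('o,'m) ccat \<Rightarrow> 'm \<Rightarrow> 'm \<Rightarrow> bool" where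
  "kernel_cokernel_pair C i p \<longleftrightarrow> is_kernel C i p \<and> is_cokernel C p i"

definition iso :: "('o,'m) ccat \<Rightarrow> 'm \<Rightarrow> bool" where
  "iso C f \<longleftrightarrow> f \<in> mor C \<and> (\<exists>g\<in>hom C (tgt C f) (src C f).
      cmp C g f = ident C (src C f) \<and> cmp C f g = ident C (tgt C f))"

definition conflation_category :: "('o,'m) ccat \<Rightarrow> bool" where
  "conflation_category C \<longleftrightarrow> additive C
   \<and> (\<forall>(i,p)\<in>conflations C. kernel_cokernel_pair C i p)
   \<and> (\<forall>i p i' p' a b c. (i,p) \<in> conflations C \<longrightarrow>
        i' \<in> hom C (src C i') (tgt C i') \<longrightarrow> p' \<in> hom C (tgt C i') (tgt C p') \<longrightarrow>
        iso C a \<longrightarrow> iso C b \<longrightarrow> iso C c \<longrightarrow>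
        a \<in> hom C (src C i) (src C i') \<longrightarrow> b \<in> hom C (tgt C i) (tgt C i') \<longrightarrow>
        c \<in> hom C (tgt C p) (tgt C p') \<longrightarrow>
        cmp C b i = cmp C i' a \<longrightarrow> cmp C c p = cmp C p' b \<longrightarrow>
        (i',p') \<in> conflations C)"

definition inflation :: "('o,'m) ccat \<Rightarrow> 'm \<Rightarrow> bool" where
  "inflation C i \<longleftrightarrow> (\<exists>p. (i,p) \<in> conflations C)"

definition deflation :: "('o,'m) ccat \<Rightarrow> 'm \<Rightarrow> bool" where
  "deflation C p \<longleftrightarrow> (\<exists>i. (i,p) \<in> conflations C)"

definition is_pullback :: "('o,'m) ccat \<Rightarrow> 'm \<Rightarrow> 'm \<Rightarrow> 'm \<Rightarrow> 'm \<Rightarrow> bool" where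
  "is_pullback C p f p' f' \<longleftrightarrow> (\<exists>B D E P.
     p \<in> hom C B D \<and> f \<in> hom C E D \<and> p' \<in> hom C P E \<and> f' \<in> hom C P B
   \<and> cmp C p f' = cmp C f p'
   \<and> (\<forall>W u v. W \<in> obj C \<longrightarrow> u \<in> hom C W B \<longrightarrow> v \<in> hom C W E \<longrightarrow> cmp C p u = cmp C f v \<longrightarrow>
        (\<exists>!w. w \<in> hom C W P \<and> cmp C f' w = u \<and> cmp C p' w = v)))"

definition is_pushout :: "('o,'m) ccat \<Rightarrow> 'm \<Rightarrow> 'm \<Rightarrow> 'm \<Rightarrow> 'm \<Rightarrow> bool" where
  "is_pushout C a b a' b' \<longleftrightarrow> (\<exists>B D E P.
     a \<in> hom C B D \<and> b \<in> hom C B E \<and> a' \<in> hom C E P \<and> b' \<in> hom C D P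
   \<and> cmp C b' a = cmp C a' b
   \<and> (\<forall>W u v. W \<in> obj C \<longrightarrow> u \<in> hom C D W \<longrightarrow> v \<in> hom C E W \<longrightarrow> cmp C u a = cmp C v b \<longrightarrow>
        (\<exists>!w. w \<in> hom C P W \<and> cmp C w b' = u \<and> cmp C w a' = v)))"

definition deflation_exact :: "('o,'m) ccat \<Rightarrow> bool" where
  "deflation_exact C \<longleftrightarrow> conflation_category C
   \<and> (\<forall>Z. zero_object C Z \<longrightarrow> deflation C (ident C Z))
   \<and> (\<forall>p q. deflation C p \<longrightarrow> deflation C q \<longrightarrow> tgt C p = src C q \<longrightarrow> deflation C (cmp C q p))
   \<and> (\<forall>p f. deflation C p \<longrightarrow> f \<in> mor C \<longrightarrow> tgt C f = tgt C p \<longrightarrow>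
        (\<exists>p' f'. is_pullback C p f p' f' \<and> deflation C p'))"

definition admissibly_deflation_percolating :: "('o,'m) ccat \<Rightarrow> 'o set \<Rightarrow> bool" where
  "admissibly_deflation_percolating C A \<longleftrightarrow> A \<subseteq> obj C \<and> A \<noteq> {}
   \<and> (\<forall>(i,p)\<in>conflations C. tgt C i \<in> A \<longleftrightarrow> (src C i \<in> A \<and> tgt C p \<in> A))
   \<and> (\<forall>f\<in>mor C. tgt C f \<in> A \<longrightarrow> (\<exists>e m. deflation C e \<and> inflation C m
        \<and> src C e = src C f \<and> tgt C e = src C m \<and> tgt C m = tgt C f \<and> src C m \<in> A
        \<and> cmp C m e = f))
   \<and> (\<forall>a b. inflation C a \<longrightarrow> deflation C b \<longrightarrow> src C a = src C b \<longrightarrow> tgt C b \<in> A \<longrightarrow>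
        (\<exists>a' b'. is_pushout C a b a' b' \<and> deflation C b' \<and> inflation C a'))"

definition A_inflation :: "('o,'m) ccat \<Rightarrow> 'o set \<Rightarrow> 'm \<Rightarrow> bool" where
  "A_inflation C A i \<longleftrightarrow> (\<exists>p. (i,p) \<in> conflations C \<and> tgt C p \<in> A)"

definition A_deflation :: "('o,'m) ccat \<Rightarrow> 'o set \<Rightarrow> 'm \<Rightarrow> bool" where
  "A_deflation C A p \<longleftrightarrow> (\<exists>i. (i,p) \<in> conflations C \<and> src C i \<in> A)"

end

theory Submission
  imports Defs
begin


locale dex =
  fixes C :: "('o,'m) ccat" and A :: "'o set"
  assumes DE: "deflation_exact C"
    and AP: "admissibly_deflation_percolating C A"
begin

abbreviation cp (infixr "\<cdot>" 70) where "g \<cdot> f \<equiv> cmp C g f"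
abbreviation ad (infixl "\<oplus>" 65) where "f \<oplus> g \<equiv> madd C f g"
abbreviation ng ("\<ominus>_" [81] 80) where "\<ominus>f \<equiv> mneg C f"
abbreviation "sr \<equiv> src C"
abbreviation "tg \<equiv> tgt C"
abbreviation "Mo \<equiv> mor C"
abbreviation "Ob \<equiv> obj C"
abbreviation "zr \<equiv> mzero C"
abbreviation "idn \<equiv> ident C"
abbreviation "Hom \<equiv> hom C"

lemma hom_iff: "f \<in> Hom X Y \<longleftrightarrow> f \<in> Mo \<and> sr f = X \<and> tg f = Y"
  by (auto simp: hom_def)

lemma CF: "conflation_category C" using DE by (simp add: deflation_exact_def)
lemma ADD: "additive C" using CF by (simp add: conflation_category_def)
lemma PRE: "preadditive C" using ADD by (simp add: additive_def)
lemma CAT: "category C" using PRE by (simp add: preadditive_def)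

lemma src_obj[simp]: "f \<in> Mo \<Longrightarrow> sr f \<in> Ob" using CAT by (simp add: category_def)
lemma tgt_obj[simp]: "f \<in> Mo \<Longrightarrow> tg f \<in> Ob" using CAT by (simp add: category_def)

lemma id_ty[simp]: "X \<in> Ob \<Longrightarrow> idn X \<in> Mo" "X \<in> Ob \<Longrightarrow> sr (idn X) = X" "X \<in> Ob \<Longrightarrow> tg (idn X) = X"
  using CAT by (auto simp: category_def hom_def)

lemma cmp_ty[simp]:
  assumes "f \<in> Mo" "g \<in> Mo" "tg f = sr g"
  shows "g \<cdot> f \<in> Mo" "sr (g \<cdot> f) = sr f" "tg (g \<cdot> f) = tg g"
  using CAT assms unfolding category_def hom_def by blast+

lemma zr_ty[simp]: "X \<in> Ob \<Longrightarrow> Y \<in> Ob \<Longrightarrow> zr X Y \<in> Mo"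
  "X \<in> Ob \<Longrightarrow> Y \<in> Ob \<Longrightarrow> sr (zr X Y) = X"
  "X \<in> Ob \<Longrightarrow> Y \<in> Ob \<Longrightarrow> tg (zr X Y) = Y"
  using PRE unfolding preadditive_def hom_def by blast+

lemma PA_add: "X \<in> Ob \<Longrightarrow> Y \<in> Ob \<Longrightarrow> f \<in> Hom X Y \<Longrightarrow> g \<in> Hom X Y \<Longrightarrow> f \<oplus> g \<in> Hom X Y \<and> f \<oplus> g = g \<oplus> f"
  using PRE unfolding preadditive_def by blast
lemma PA_assoc: "X \<in> Ob \<Longrightarrow> Y \<in> Ob \<Longrightarrow> f \<in> Hom X Y \<Longrightarrow> g \<in> Hom X Y \<Longrightarrow> h \<in> Hom X Y \<Longrightarrow> (f \<oplus> g) \<oplus> h = f \<oplus> (g \<oplus> h)"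
  using PRE unfolding preadditive_def by blast
lemma PA_zero: "X \<in> Ob \<Longrightarrow> Y \<in> Ob \<Longrightarrow> f \<in> Hom X Y \<Longrightarrow> f \<oplus> zr X Y = f \<and> \<ominus>f \<in> Hom X Y \<and> f \<oplus> \<ominus>f = zr X Y"
  using PRE unfolding preadditive_def by blast
lemma PA_dl: "X \<in> Ob \<Longrightarrow> Y \<in> Ob \<Longrightarrow> W \<in> Ob \<Longrightarrow> f \<in> Hom X Y \<Longrightarrow> g \<in> Hom X Y \<Longrightarrow> h \<in> Hom Y W \<Longrightarrow> h \<cdot> (f \<oplus> g) = h \<cdot> f \<oplus> h \<cdot> g"
  using PRE unfolding preadditive_def by blast
lemma PA_dr: "X \<in> Ob \<Longrightarrow> Y \<in> Ob \<Longrightarrow> W \<in> Ob \<Longrightarrow> f \<in> Hom X Y \<Longrightarrow> g \<in> Hom X Y \<Longrightarrow> k \<in> Hom W X \<Longrightarrow> (f \<oplus> g) \<cdot> k = f \<cdot> k \<oplus> g \<cdot> k"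
  using PRE unfolding preadditive_def by blast

lemma add_ty[simp]:
  assumes "f \<in> Mo" "g \<in> Mo" "sr f = sr g" "tg f = tg g"
  shows "f \<oplus> g \<in> Mo" "sr (f \<oplus> g) = sr f" "tg (f \<oplus> g) = tg f"
proof -
  have "f \<oplus> g \<in> Hom (sr f) (tg f)" using PA_add[of "sr f" "tg f" f g] assms unfolding hom_iff by (metis src_obj tgt_obj)
  then show "f \<oplus> g \<in> Mo" "sr (f \<oplus> g) = sr f" "tg (f \<oplus> g) = tg f" by (auto simp: hom_iff)
qed

lemma neg_ty[simp]:
  assumes "f \<in> Mo"
  shows "\<ominus>f \<in> Mo" "sr (\<ominus>f) = sr f" "tg (\<ominus>f) = tg f"
proof -
  have "\<ominus>f \<in> Hom (sr f) (tg f)" using PA_zero[of "sr f" "tg f" f] assms by (simp add: hom_iff)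
  then show "\<ominus>f \<in> Mo" "sr (\<ominus>f) = sr f" "tg (\<ominus>f) = tg f" by (auto simp: hom_iff)
qed

lemma assoc[simp]:
  assumes "f \<in> Mo" "g \<in> Mo" "h \<in> Mo" "tg f = sr g" "tg g = sr h"
  shows "(h \<cdot> g) \<cdot> f = h \<cdot> (g \<cdot> f)"
  using CAT assms unfolding category_def by metis

lemma id_l[simp]: "f \<in> Mo \<Longrightarrow> tg f = Y \<Longrightarrow> idn Y \<cdot> f = f"
  using CAT unfolding category_def by blast
lemma id_r[simp]: "f \<in> Mo \<Longrightarrow> sr f = Y \<Longrightarrow> f \<cdot> idn Y = f"
  using CAT unfolding category_def by blast

lemma add_comm:
  assumes "f \<in> Mo" "g \<in> Mo" "sr f = sr g" "tg f = tg g"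
  shows "f \<oplus> g = g \<oplus> f"
  using PA_add[of "sr f" "tg f" f g] assms unfolding hom_iff by (metis src_obj tgt_obj)

lemma add_assoc[simp]:
  assumes "f \<in> Mo" "g \<in> Mo" "h \<in> Mo" "sr f = sr g" "tg f = tg g" "sr h = sr f" "tg h = tg f"
  shows "(f \<oplus> g) \<oplus> h = f \<oplus> (g \<oplus> h)"
  using PA_assoc[of "sr f" "tg f" f g h] assms by (simp add: hom_iff)

lemma add_zr_r[simp]: "f \<in> Mo \<Longrightarrow> sr f = X \<Longrightarrow> tg f = Y \<Longrightarrow> f \<oplus> zr X Y = f"
  using PA_zero[of X Y f] by (auto simp: hom_iff)

lemma add_zr_l[simp]: "f \<in> Mo \<Longrightarrow> sr f = X \<Longrightarrow> tg f = Y \<Longrightarrow> zr X Y \<oplus> f = f"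
  using add_comm[of f "zr X Y"] by auto

lemma neg_r[simp]: "f \<in> Mo \<Longrightarrow> f \<oplus> \<ominus>f = zr (sr f) (tg f)"
  using PA_zero[of "sr f" "tg f" f] by (auto simp: hom_iff)

lemma neg_l[simp]: "f \<in> Mo \<Longrightarrow> \<ominus>f \<oplus> f = zr (sr f) (tg f)"
  using add_comm[of f "\<ominus>f"] by auto

lemma dist_l[simp]:
  assumes "f \<in> Mo" "g \<in> Mo" "sr f = sr g" "tg f = tg g" "h \<in> Mo" "sr h = tg f"
  shows "h \<cdot> (f \<oplus> g) = h \<cdot> f \<oplus> h \<cdot> g"
  using PA_dl[of "sr f" "tg f" "tg h" f g h] assms by (simp add: hom_iff)

lemma dist_r[simp]:
  assumes "f \<in> Mo" "g \<in> Mo" "sr f = sr g" "tg f = tg g" "k \<in> Mo" "tg k = sr f"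
  shows "(f \<oplus> g) \<cdot> k = f \<cdot> k \<oplus> g \<cdot> k"
  using PA_dr[of "sr f" "tg f" "sr k" f g k] assms by (simp add: hom_iff)

lemma add_cancel_r:
  assumes "a \<in> Mo" "b \<in> Mo" "c \<in> Mo" "sr a = sr c" "tg a = tg c" "sr b = sr c" "tg b = tg c"
    and "a \<oplus> c = b \<oplus> c"
  shows "a = b"
proof -
  have "a = (a \<oplus> c) \<oplus> \<ominus>c" using assms(1-7) by simp
  also have "\<dots> = (b \<oplus> c) \<oplus> \<ominus>c" using assms(8) by simp
  also have "\<dots> = b" using assms(1-7) by simp
  finally show ?thesis .
qed

lemma zr_r[simp]:
  assumes "f \<in> Mo" "sr f = Y" "X \<in> Ob"
  shows "f \<cdot> zr X Y = zr X (tg f)"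
proof -
  have Y: "Y \<in> Ob" using assms src_obj by blast
  have "zr X Y \<oplus> zr X Y = zr X Y" using assms Y by simp
  then have "f \<cdot> zr X Y \<oplus> f \<cdot> zr X Y = f \<cdot> zr X Y" using assms Y
    by (metis dist_l zr_ty)
  also have "\<dots> = zr X (tg f) \<oplus> f \<cdot> zr X Y" using assms Y by simp
  finally show ?thesis using assms Y add_cancel_r[of "f \<cdot> zr X Y" "zr X (tg f)" "f \<cdot> zr X Y"]
    by simp
qed

lemma zr_l[simp]:
  assumes "f \<in> Mo" "tg f = Y" "W \<in> Ob"
  shows "zr Y W \<cdot> f = zr (sr f) W"
proof -
  have Y: "Y \<in> Ob" using assms tgt_obj by blast
  have "zr Y W \<oplus> zr Y W = zr Y W" using assms Y by simp
  then have "zr Y W \<cdot> f \<oplus> zr Y W \<cdot> f = zr Y W \<cdot> f" using assms Y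
    by (metis dist_r zr_ty)
  also have "\<dots> = zr (sr f) W \<oplus> zr Y W \<cdot> f" using assms Y by simp
  finally show ?thesis using assms Y add_cancel_r[of "zr Y W \<cdot> f" "zr (sr f) W" "zr Y W \<cdot> f"]
    by simp
qed

lemma neg_unique:
  assumes "a \<in> Mo" "b \<in> Mo" "sr a = sr b" "tg a = tg b" "a \<oplus> b = zr (sr a) (tg a)"
  shows "b = \<ominus>a"
  using add_cancel_r[of b "\<ominus>a" a] assms by (simp add: add_comm)

lemma neg_cmp_r[simp]:
  assumes "f \<in> Mo" "h \<in> Mo" "sr h = tg f"
  shows "h \<cdot> (\<ominus>f) = \<ominus>(h \<cdot> f)"
proof -
  have "h \<cdot> f \<oplus> h \<cdot> (\<ominus>f) = h \<cdot> (f \<oplus> \<ominus>f)" using assms by (intro dist_l[symmetric]) auto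
  also have "\<dots> = zr (sr f) (tg h)" using assms by (simp del: dist_l)
  finally show ?thesis using assms neg_unique[of "h \<cdot> f" "h \<cdot> (\<ominus>f)"] by simp
qed

lemma neg_cmp_l[simp]:
  assumes "f \<in> Mo" "k \<in> Mo" "tg k = sr f"
  shows "(\<ominus>f) \<cdot> k = \<ominus>(f \<cdot> k)"
proof -
  have "f \<cdot> k \<oplus> (\<ominus>f) \<cdot> k = (f \<oplus> \<ominus>f) \<cdot> k" using assms by (intro dist_r[symmetric]) auto
  also have "\<dots> = zr (sr k) (tg f)" using assms by (simp del: dist_r)
  finally show ?thesis using assms neg_unique[of "f \<cdot> k" "(\<ominus>f) \<cdot> k"] by simp
qed

lemma neg_cancel_r2[simp]:
  assumes "f \<in> Mo" "g \<in> Mo" "sr f = sr g" "tg f = tg g"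
  shows "f \<oplus> (\<ominus>f \<oplus> g) = g" "\<ominus>f \<oplus> (f \<oplus> g) = g"
  using assms by (subst add_assoc[symmetric]; auto)+

lemma neg_neg[simp]: "f \<in> Mo \<Longrightarrow> \<ominus>(\<ominus>f) = f"
  by (metis neg_l neg_ty neg_unique)

lemma neg_zr[simp]: "X \<in> Ob \<Longrightarrow> Y \<in> Ob \<Longrightarrow> \<ominus>(zr X Y) = zr X Y"
  by (metis add_zr_l neg_r neg_ty zr_ty)

lemma eq_sub:
  assumes "a \<in> Mo" "b \<in> Mo" "c \<in> Mo" "sr a = sr c" "tg a = tg c" "sr b = sr c" "tg b = tg c"
    and "a \<oplus> b = c"
  shows "a = c \<oplus> \<ominus>b"
  using assms add_assoc[of a b "\<ominus>b"] by auto

end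


context dex
begin

lemma ex1_uniq: "\<exists>!w. P w \<Longrightarrow> P a \<Longrightarrow> P b \<Longrightarrow> a = b" by blast

definition kern where
  "kern k p K Y Z \<longleftrightarrow> k \<in> Hom K Y \<and> p \<in> Hom Y Z \<and> p \<cdot> k = zr K Z \<and>
     (\<forall>W t. W \<in> Ob \<longrightarrow> t \<in> Hom W Y \<longrightarrow> p \<cdot> t = zr W Z \<longrightarrow> (\<exists>!u. u \<in> Hom W K \<and> k \<cdot> u = t))"

definition cok where
  "cok p k K Y Z \<longleftrightarrow> k \<in> Hom K Y \<and> p \<in> Hom Y Z \<and> p \<cdot> k = zr K Z \<and>
     (\<forall>W t. W \<in> Ob \<longrightarrow> t \<in> Hom Y W \<longrightarrow> t \<cdot> k = zr K W \<longrightarrow> (\<exists>!u. u \<in> Hom Z W \<and> u \<cdot> p = t))"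

abbreviation "Conf \<equiv> conflations C"

lemma conf_kc: "(i, p) \<in> Conf \<Longrightarrow> kernel_cokernel_pair C i p"
  using CF unfolding conflation_category_def by blast

lemma conf_D:
  assumes "(i, p) \<in> Conf" "i \<in> Hom K Y" "p \<in> Hom Y Z"
  shows "kern i p K Y Z" "cok p i K Y Z"
proof -
  have "is_kernel C i p" "is_cokernel C p i" using conf_kc[OF assms(1)]
    by (auto simp: kernel_cokernel_pair_def)
  then show "kern i p K Y Z" "cok p i K Y Z" using assms(2,3)
    unfolding is_kernel_def is_cokernel_def kern_def cok_def hom_iff by auto
qed

lemma conf_ty:
  assumes "(i, p) \<in> Conf"
  shows "i \<in> Mo" "p \<in> Mo" "tg i = sr p"
proof -
  have "is_kernel C i p" using conf_kc[OF assms(1)]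
    by (auto simp: kernel_cokernel_pair_def)
  then show "i \<in> Mo" "p \<in> Mo" "tg i = sr p"
    unfolding is_kernel_def hom_iff by auto
qed

lemma conf_D':
  assumes "(i, p) \<in> Conf"
  shows "kern i p (sr i) (tg i) (tg p)" "cok p i (sr i) (tg i) (tg p)"
  using conf_D[OF assms] conf_ty[OF assms] by (auto simp: hom_iff)

lemma kern_lift:
  assumes "kern k p K Y Z" "t \<in> Hom W Y" "p \<cdot> t = zr W Z"
  shows "\<exists>u. u \<in> Hom W K \<and> k \<cdot> u = t"
proof -
  have "W \<in> Ob" using assms(2) by (auto simp: hom_iff)
  then show ?thesis using assms unfolding kern_def by blast
qed

lemma kern_mono:
  assumes "kern k p K Y Z" "u \<in> Hom W K" "v \<in> Hom W K" "k \<cdot> u = k \<cdot> v"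
  shows "u = v"
proof -
  have W: "W \<in> Ob" using assms(2) by (auto simp: hom_iff)
  have k: "k \<in> Hom K Y" "p \<in> Hom Y Z" "p \<cdot> k = zr K Z" using assms(1) unfolding kern_def by auto
  have "k \<cdot> u \<in> Hom W Y" using k assms(2) by (auto simp: hom_iff)
  moreover have "p \<cdot> (k \<cdot> u) = zr W Z" using k assms(2) W
    by (auto simp: hom_iff simp flip: assoc)
  ultimately have "\<exists>!w. w \<in> Hom W K \<and> k \<cdot> w = k \<cdot> u" using assms(1) W unfolding kern_def by blast
  then show ?thesis by (rule ex1_uniq) (use assms(2-4) in auto)
qed

lemma cok_desc:
  assumes "cok p k K Y Z" "t \<in> Hom Y W" "t \<cdot> k = zr K W"
  shows "\<exists>u. u \<in> Hom Z W \<and> u \<cdot> p = t"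
proof -
  have "W \<in> Ob" using assms(2) by (auto simp: hom_iff)
  then show ?thesis using assms unfolding cok_def by blast
qed

lemma cok_epi:
  assumes "cok p k K Y Z" "u \<in> Hom Z W" "v \<in> Hom Z W" "u \<cdot> p = v \<cdot> p"
  shows "u = v"
proof -
  have W: "W \<in> Ob" using assms(2) by (auto simp: hom_iff)
  have k: "k \<in> Hom K Y" "p \<in> Hom Y Z" "p \<cdot> k = zr K Z" using assms(1) unfolding cok_def by auto
  have "u \<cdot> p \<in> Hom Y W" using k assms(2) by (auto simp: hom_iff)
  moreover have "(u \<cdot> p) \<cdot> k = zr K W" using k assms(2) W
    by (auto simp: hom_iff)
  ultimately have "\<exists>!w. w \<in> Hom Z W \<and> w \<cdot> p = u \<cdot> p" using assms(1) W unfolding cok_def by blast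
  then show ?thesis by (rule ex1_uniq) (use assms(2-4) in auto)
qed

lemma isoI:
  assumes "a \<in> Hom X Y" "b \<in> Hom Y X" "b \<cdot> a = idn X" "a \<cdot> b = idn Y"
  shows "iso C a"
  unfolding iso_def using assms by (auto simp: hom_iff intro!: bexI[of _ b])

lemma iso_id: "X \<in> Ob \<Longrightarrow> iso C (idn X)"
  by (rule isoI[of _ X X "idn X"]) (auto simp: hom_iff)

lemma CFiso: "\<forall>i p i' p' a b c. (i,p) \<in> conflations C \<longrightarrow>
        i' \<in> hom C (src C i') (tgt C i') \<longrightarrow> p' \<in> hom C (tgt C i') (tgt C p') \<longrightarrow>
        iso C a \<longrightarrow> iso C b \<longrightarrow> iso C c \<longrightarrow>
        a \<in> hom C (src C i) (src C i') \<longrightarrow> b \<in> hom C (tgt C i) (tgt C i') \<longrightarrow>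
        c \<in> hom C (tgt C p) (tgt C p') \<longrightarrow>
        cmp C b i = cmp C i' a \<longrightarrow> cmp C c p = cmp C p' b \<longrightarrow>
        (i',p') \<in> conflations C"
  using CF[unfolded conflation_category_def] by (elim conjE)

lemma conf_iso:
  assumes "(i, p) \<in> Conf" "i \<in> Hom K Y" "p \<in> Hom Y Z"
    "i' \<in> Hom K' Y'" "p' \<in> Hom Y' Z'"
    "a \<in> Hom K K'" "iso C a" "b \<in> Hom Y Y'" "iso C b" "c \<in> Hom Z Z'" "iso C c"
    "b \<cdot> i = i' \<cdot> a" "c \<cdot> p = p' \<cdot> b"
  shows "(i', p') \<in> Conf"
proof (rule CFiso[rule_format, of i p i' p' a b c])
  show "(i, p) \<in> Conf" "iso C a" "iso C b" "iso C c" "b \<cdot> i = i' \<cdot> a" "c \<cdot> p = p' \<cdot> b"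
    using assms by auto
  show "i' \<in> Hom (sr i') (tg i')" "p' \<in> Hom (tg i') (tg p')" "a \<in> Hom (sr i) (sr i')"
    "b \<in> Hom (tg i) (tg i')" "c \<in> Hom (tg p) (tg p')"
    using assms(2-6,8,10) unfolding hom_iff by auto
qed

lemma conf_iso_simple:
  assumes "(i, p) \<in> Conf" "i \<in> Hom K Y" "p \<in> Hom Y Z"
    "a \<in> Hom K' K" "a' \<in> Hom K K'" "a \<cdot> a' = idn K" "a' \<cdot> a = idn K'"
    "b \<in> Hom Y Y'" "b' \<in> Hom Y' Y" "b \<cdot> b' = idn Y'" "b' \<cdot> b = idn Y"
    "c \<in> Hom Z Z'" "c' \<in> Hom Z' Z" "c \<cdot> c' = idn Z'" "c' \<cdot> c = idn Z"
  shows "(b \<cdot> i \<cdot> a, c \<cdot> p \<cdot> b') \<in> Conf"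
proof (rule conf_iso[OF assms(1-3), of _ K' Y' _ Z' a'])
  show "b \<cdot> i \<cdot> a \<in> Hom K' Y'" "c \<cdot> p \<cdot> b' \<in> Hom Y' Z'" "a' \<in> Hom K K'" "b \<in> Hom Y Y'" "c \<in> Hom Z Z'"
    using assms by (auto simp: hom_iff)
  show "iso C a'" using isoI[OF assms(5,4,6,7)] .
  show "iso C b" using isoI[OF assms(8,9,11,10)] .
  show "iso C c" using isoI[OF assms(12,13,15,14)] .
  have "b \<cdot> i \<cdot> a \<cdot> a' = b \<cdot> i \<cdot> (a \<cdot> a')" using assms by (auto simp: hom_iff)
  then show "b \<cdot> i = (b \<cdot> i \<cdot> a) \<cdot> a'" using assms by (auto simp: hom_iff)
  have "c \<cdot> p \<cdot> b' \<cdot> b = c \<cdot> p \<cdot> (b' \<cdot> b)" using assms by (auto simp: hom_iff)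
  then show "c \<cdot> p = (c \<cdot> p \<cdot> b') \<cdot> b" using assms by (auto simp: hom_iff)
qed

lemma kern_conf:
  assumes "deflation C p" "p \<in> Hom Y Z" "kern k p K Y Z"
  shows "(k, p) \<in> Conf"
proof -
  obtain k0 where k0: "(k0, p) \<in> Conf" using assms(1) unfolding deflation_def by blast
  define K0 where "K0 = sr k0"
  have k0h: "k0 \<in> Hom K0 Y" using conf_ty[OF k0] assms(2) K0_def by (auto simp: hom_iff)
  have kk0: "kern k0 p K0 Y Z" using conf_D[OF k0 k0h assms(2)] by simp
  have kh: "k \<in> Hom K Y" "p \<cdot> k = zr K Z" using assms(3) unfolding kern_def by auto
  have k0z: "p \<cdot> k0 = zr K0 Z" using kk0 unfolding kern_def by auto
  obtain phi where phi: "phi \<in> Hom K K0" "k0 \<cdot> phi = k" using kern_lift[OF kk0 kh] by blast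
  obtain psi where psi: "psi \<in> Hom K0 K" "k \<cdot> psi = k0" using kern_lift[OF assms(3) k0h k0z] by blast
  have K: "K \<in> Ob" "K0 \<in> Ob" using kh k0h by (auto simp: hom_iff)
  have "psi \<cdot> phi = idn K"
  proof (rule kern_mono[OF assms(3)])
    show "psi \<cdot> phi \<in> Hom K K" "idn K \<in> Hom K K" using phi psi K by (auto simp: hom_iff)
    have "k \<cdot> (psi \<cdot> phi) = (k \<cdot> psi) \<cdot> phi" using phi(1) psi(1) kh(1) by (simp add: hom_iff)
    also have "\<dots> = k" by (simp only: psi(2) phi(2))
    also have "\<dots> = k \<cdot> idn K" using kh(1) by (simp add: hom_iff)
    finally show "k \<cdot> (psi \<cdot> phi) = k \<cdot> idn K" .
  qed
  moreover have "phi \<cdot> psi = idn K0"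
  proof (rule kern_mono[OF kk0])
    show "phi \<cdot> psi \<in> Hom K0 K0" "idn K0 \<in> Hom K0 K0" using phi psi K by (auto simp: hom_iff)
    have "k0 \<cdot> (phi \<cdot> psi) = (k0 \<cdot> phi) \<cdot> psi" using phi(1) psi(1) k0h(1) by (simp add: hom_iff)
    also have "\<dots> = k0" by (simp only: psi(2) phi(2))
    also have "\<dots> = k0 \<cdot> idn K0" using k0h(1) by (simp add: hom_iff)
    finally show "k0 \<cdot> (phi \<cdot> psi) = k0 \<cdot> idn K0" .
  qed
  ultimately have "(idn Y \<cdot> k0 \<cdot> phi, idn Z \<cdot> p \<cdot> idn Y) \<in> Conf"
    using conf_iso_simple[OF k0 k0h assms(2) phi(1) psi(1), of "idn Y" Y "idn Y" "idn Z" Z "idn Z"] K assms(2)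
    by (auto simp: hom_iff)
  then show ?thesis using phi k0h assms(2) by (auto simp: hom_iff)
qed

lemma cok_conf:
  assumes "inflation C k" "k \<in> Hom K Y" "cok p k K Y Z"
  shows "(k, p) \<in> Conf"
proof -
  obtain p0 where p0: "(k, p0) \<in> Conf" using assms(1) unfolding inflation_def by blast
  define Z0 where "Z0 = tg p0"
  have p0h: "p0 \<in> Hom Y Z0" using conf_ty[OF p0] assms(2) Z0_def by (auto simp: hom_iff)
  have cp0: "cok p0 k K Y Z0" using conf_D[OF p0 assms(2) p0h] by simp
  have ph: "p \<in> Hom Y Z" "p \<cdot> k = zr K Z" using assms(3) unfolding cok_def by auto
  have p0z: "p0 \<cdot> k = zr K Z0" using cp0 unfolding cok_def by auto
  obtain phi where phi: "phi \<in> Hom Z0 Z" "phi \<cdot> p0 = p" using cok_desc[OF cp0 ph] by blast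
  obtain psi where psi: "psi \<in> Hom Z Z0" "psi \<cdot> p = p0" using cok_desc[OF assms(3) p0h p0z] by blast
  have K: "Z \<in> Ob" "Z0 \<in> Ob" "K \<in> Ob" "Y \<in> Ob" using ph p0h assms(2) by (auto simp: hom_iff)
  have "psi \<cdot> phi = idn Z0"
  proof (rule cok_epi[OF cp0])
    show "psi \<cdot> phi \<in> Hom Z0 Z0" "idn Z0 \<in> Hom Z0 Z0" using phi psi K by (auto simp: hom_iff)
    have "(psi \<cdot> phi) \<cdot> p0 = psi \<cdot> (phi \<cdot> p0)" using phi(1) psi(1) p0h(1) by (simp add: hom_iff)
    also have "\<dots> = p0" by (simp only: psi(2) phi(2))
    also have "\<dots> = idn Z0 \<cdot> p0" using p0h(1) by (simp add: hom_iff)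
    finally show "(psi \<cdot> phi) \<cdot> p0 = idn Z0 \<cdot> p0" .
  qed
  moreover have "phi \<cdot> psi = idn Z"
  proof (rule cok_epi[OF assms(3)])
    show "phi \<cdot> psi \<in> Hom Z Z" "idn Z \<in> Hom Z Z" using phi psi K by (auto simp: hom_iff)
    have "(phi \<cdot> psi) \<cdot> p = phi \<cdot> (psi \<cdot> p)" using phi(1) psi(1) ph(1) by (simp add: hom_iff)
    also have "\<dots> = p" by (simp only: psi(2) phi(2))
    also have "\<dots> = idn Z \<cdot> p" using ph(1) by (simp add: hom_iff)
    finally show "(phi \<cdot> psi) \<cdot> p = idn Z \<cdot> p" .
  qed
  ultimately have "(idn Y \<cdot> k \<cdot> idn K, phi \<cdot> p0 \<cdot> idn Y) \<in> Conf"
    using conf_iso_simple[OF p0 assms(2) p0h, of "idn K" K "idn K" "idn Y" Y "idn Y" phi Z psi] K phi psi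
    by (auto simp: hom_iff)
  then show ?thesis using phi assms(2) p0h by (auto simp: hom_iff)
qed

end


context dex
begin

definition pb where
  "pb p f p' f' B D E P \<longleftrightarrow> p \<in> Hom B D \<and> f \<in> Hom E D \<and> p' \<in> Hom P E \<and> f' \<in> Hom P B
   \<and> p \<cdot> f' = f \<cdot> p'
   \<and> (\<forall>W u v. W \<in> Ob \<longrightarrow> u \<in> Hom W B \<longrightarrow> v \<in> Hom W E \<longrightarrow> p \<cdot> u = f \<cdot> v \<longrightarrow>
        (\<exists>!w. w \<in> Hom W P \<and> f' \<cdot> w = u \<and> p' \<cdot> w = v))"

definition po where
  "po a b a' b' B D E P \<longleftrightarrow> a \<in> Hom B D \<and> b \<in> Hom B E \<and> a' \<in> Hom E P \<and> b' \<in> Hom D P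
   \<and> b' \<cdot> a = a' \<cdot> b
   \<and> (\<forall>W u v. W \<in> Ob \<longrightarrow> u \<in> Hom D W \<longrightarrow> v \<in> Hom E W \<longrightarrow> u \<cdot> a = v \<cdot> b \<longrightarrow>
        (\<exists>!w. w \<in> Hom P W \<and> w \<cdot> b' = u \<and> w \<cdot> a' = v))"

lemma pb_D: "pb p f p' f' B D E P \<Longrightarrow> p \<in> Hom B D \<and> f \<in> Hom E D \<and> p' \<in> Hom P E \<and> f' \<in> Hom P B \<and> p \<cdot> f' = f \<cdot> p'"
  unfolding pb_def by blast

lemma po_D: "po a b a' b' B D E P \<Longrightarrow> a \<in> Hom B D \<and> b \<in> Hom B E \<and> a' \<in> Hom E P \<and> b' \<in> Hom D P \<and> b' \<cdot> a = a' \<cdot> b"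
  unfolding po_def by blast

lemma pb_lift:
  assumes "pb p f p' f' B D E P" "u \<in> Hom W B" "v \<in> Hom W E" "p \<cdot> u = f \<cdot> v"
  shows "\<exists>w. w \<in> Hom W P \<and> f' \<cdot> w = u \<and> p' \<cdot> w = v"
proof -
  have "W \<in> Ob" using assms(2) by (auto simp: hom_iff)
  then show ?thesis using assms unfolding pb_def by blast
qed

lemma pb_uniq:
  assumes "pb p f p' f' B D E P" "w1 \<in> Hom W P" "w2 \<in> Hom W P"
    "f' \<cdot> w1 = f' \<cdot> w2" "p' \<cdot> w1 = p' \<cdot> w2"
  shows "w1 = w2"
proof -
  have W: "W \<in> Ob" using assms(2) by (auto simp: hom_iff)
  have h: "p \<in> Hom B D" "f \<in> Hom E D" "p' \<in> Hom P E" "f' \<in> Hom P B" "p \<cdot> f' = f \<cdot> p'"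
    using pb_D[OF assms(1)] by auto
  have "p \<cdot> (f' \<cdot> w1) = (p \<cdot> f') \<cdot> w1" using h(1-4) assms(2) by (simp add: hom_iff)
  also have "\<dots> = (f \<cdot> p') \<cdot> w1" by (simp only: h(5))
  also have "\<dots> = f \<cdot> (p' \<cdot> w1)" using h(1-4) assms(2) by (simp add: hom_iff)
  finally have e: "p \<cdot> (f' \<cdot> w1) = f \<cdot> (p' \<cdot> w1)" .
  have "f' \<cdot> w1 \<in> Hom W B" "p' \<cdot> w1 \<in> Hom W E" using h assms(2) by (auto simp: hom_iff)
  then have "\<exists>!w. w \<in> Hom W P \<and> f' \<cdot> w = f' \<cdot> w1 \<and> p' \<cdot> w = p' \<cdot> w1"
    using assms(1) W e unfolding pb_def by blast
  then show ?thesis by (rule ex1_uniq) (use assms(2-5) in auto)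
qed

lemma po_desc:
  assumes "po a b a' b' B D E P" "u \<in> Hom D W" "v \<in> Hom E W" "u \<cdot> a = v \<cdot> b"
  shows "\<exists>w. w \<in> Hom P W \<and> w \<cdot> b' = u \<and> w \<cdot> a' = v"
proof -
  have "W \<in> Ob" using assms(2) by (auto simp: hom_iff)
  then show ?thesis using assms unfolding po_def by blast
qed

lemma po_uniq:
  assumes "po a b a' b' B D E P" "w1 \<in> Hom P W" "w2 \<in> Hom P W"
    "w1 \<cdot> b' = w2 \<cdot> b'" "w1 \<cdot> a' = w2 \<cdot> a'"
  shows "w1 = w2"
proof -
  have W: "W \<in> Ob" using assms(2) by (auto simp: hom_iff)
  have h: "a \<in> Hom B D" "b \<in> Hom B E" "a' \<in> Hom E P" "b' \<in> Hom D P" "b' \<cdot> a = a' \<cdot> b"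
    using po_D[OF assms(1)] by auto
  have "(w1 \<cdot> b') \<cdot> a = w1 \<cdot> (b' \<cdot> a)" using h(1-4) assms(2) by (simp add: hom_iff)
  also have "\<dots> = w1 \<cdot> (a' \<cdot> b)" by (simp only: h(5))
  also have "\<dots> = (w1 \<cdot> a') \<cdot> b" using h(1-4) assms(2) by (simp add: hom_iff)
  finally have e: "(w1 \<cdot> b') \<cdot> a = (w1 \<cdot> a') \<cdot> b" .
  have "w1 \<cdot> b' \<in> Hom D W" "w1 \<cdot> a' \<in> Hom E W" using h assms(2) by (auto simp: hom_iff)
  then have "\<exists>!w. w \<in> Hom P W \<and> w \<cdot> b' = w1 \<cdot> b' \<and> w \<cdot> a' = w1 \<cdot> a'"
    using assms(1) W e unfolding po_def by blast
  then show ?thesis by (rule ex1_uniq) (use assms(2-5) in auto)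
qed

lemma pb_swap:
  assumes "pb p f p' f' B D E P"
  shows "pb f p f' p' E D B P"
  using assms unfolding pb_def by metis

lemma R2:
  assumes "deflation C p" "p \<in> Hom B D" "f \<in> Hom E D"
  shows "\<exists>P p' f'. pb p f p' f' B D E P \<and> deflation C p'"
proof -
  have "\<forall>p f. deflation C p \<longrightarrow> f \<in> mor C \<longrightarrow> tgt C f = tgt C p \<longrightarrow>
        (\<exists>p' f'. is_pullback C p f p' f' \<and> deflation C p')"
    using DE unfolding deflation_exact_def by blast
  note r = this[rule_format, of p f]
  have "\<exists>p' f'. is_pullback C p f p' f' \<and> deflation C p'"
    by (rule r) (use assms in \<open>auto simp: hom_iff\<close>)
  then obtain p' f' where "is_pullback C p f p' f'" "deflation C p'" by blast
  then obtain B' D' E' P where "pb p f p' f' B' D' E' P"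
    unfolding is_pullback_def pb_def by blast
  moreover have "B' = B" "D' = D" "E' = E" using calculation pb_D assms by (auto simp: hom_iff)
  ultimately show ?thesis using \<open>deflation C p'\<close> by blast
qed

lemma A3:
  assumes "inflation C a" "deflation C b" "a \<in> Hom B D" "b \<in> Hom B E" "E \<in> A"
  shows "\<exists>P a' b'. po a b a' b' B D E P \<and> deflation C b' \<and> inflation C a'"
proof -
  have "\<forall>a b. inflation C a \<longrightarrow> deflation C b \<longrightarrow> src C a = src C b \<longrightarrow> tgt C b \<in> A \<longrightarrow>
        (\<exists>a' b'. is_pushout C a b a' b' \<and> deflation C b' \<and> inflation C a')"
    using AP unfolding admissibly_deflation_percolating_def by blast
  note r = this[rule_format, of a b]
  have "\<exists>a' b'. is_pushout C a b a' b' \<and> deflation C b' \<and> inflation C a'"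
    by (rule r) (use assms in \<open>auto simp: hom_iff\<close>)
  then obtain a' b' where "is_pushout C a b a' b'" "deflation C b'" "inflation C a'" by blast
  then obtain B' D' E' P where "po a b a' b' B' D' E' P"
    unfolding is_pushout_def po_def by blast
  moreover have "B' = B" "D' = D" "E' = E" using calculation po_D assms by (auto simp: hom_iff)
  ultimately show ?thesis using \<open>deflation C b'\<close> \<open>inflation C a'\<close> by blast
qed

lemma pb_iso:
  assumes "pb p f p' f' B D E P" "pb p f p0 f0 B D E P0"
  shows "\<exists>phi psi. phi \<in> Hom P P0 \<and> psi \<in> Hom P0 P \<and> psi \<cdot> phi = idn P \<and> phi \<cdot> psi = idn P0
     \<and> p0 \<cdot> phi = p' \<and> f0 \<cdot> phi = f' \<and> p' \<cdot> psi = p0 \<and> f' \<cdot> psi = f0"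
proof -
  have h: "p \<in> Hom B D" "f \<in> Hom E D" "p' \<in> Hom P E" "f' \<in> Hom P B" "p \<cdot> f' = f \<cdot> p'"
    using pb_D[OF assms(1)] by auto
  have h0: "p0 \<in> Hom P0 E" "f0 \<in> Hom P0 B" "p \<cdot> f0 = f \<cdot> p0"
    using pb_D[OF assms(2)] by auto
  obtain phi where phi: "phi \<in> Hom P P0" "f0 \<cdot> phi = f'" "p0 \<cdot> phi = p'"
    using pb_lift[OF assms(2) h(4) h(3) h(5)] by blast
  obtain psi where psi: "psi \<in> Hom P0 P" "f' \<cdot> psi = f0" "p' \<cdot> psi = p0"
    using pb_lift[OF assms(1) h0(2) h0(1) h0(3)] by blast
  have "psi \<cdot> phi = idn P"
  proof (rule pb_uniq[OF assms(1)])
    show "psi \<cdot> phi \<in> Hom P P" "idn P \<in> Hom P P" using phi psi by (auto simp: hom_iff)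
    have "f' \<cdot> (psi \<cdot> phi) = (f' \<cdot> psi) \<cdot> phi" using phi(1) psi(1) h(1-4) by (simp add: hom_iff)
    also have "\<dots> = f'" by (simp only: psi phi)
    also have "\<dots> = f' \<cdot> idn P" using h(1-4) by (simp add: hom_iff)
    finally show "f' \<cdot> (psi \<cdot> phi) = f' \<cdot> idn P" .
    have "p' \<cdot> (psi \<cdot> phi) = (p' \<cdot> psi) \<cdot> phi" using phi(1) psi(1) h(1-4) by (simp add: hom_iff)
    also have "\<dots> = p'" by (simp only: psi phi)
    also have "\<dots> = p' \<cdot> idn P" using h(1-4) by (simp add: hom_iff)
    finally show "p' \<cdot> (psi \<cdot> phi) = p' \<cdot> idn P" .
  qed
  moreover have "phi \<cdot> psi = idn P0"
  proof (rule pb_uniq[OF assms(2)])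
    show "phi \<cdot> psi \<in> Hom P0 P0" "idn P0 \<in> Hom P0 P0" using phi psi by (auto simp: hom_iff)
    have "f0 \<cdot> (phi \<cdot> psi) = (f0 \<cdot> phi) \<cdot> psi" using phi(1) psi(1) h0(1-2) by (simp add: hom_iff)
    also have "\<dots> = f0" by (simp only: psi phi)
    also have "\<dots> = f0 \<cdot> idn P0" using h0(1-2) by (simp add: hom_iff)
    finally show "f0 \<cdot> (phi \<cdot> psi) = f0 \<cdot> idn P0" .
    have "p0 \<cdot> (phi \<cdot> psi) = (p0 \<cdot> phi) \<cdot> psi" using phi(1) psi(1) h0(1-2) by (simp add: hom_iff)
    also have "\<dots> = p0" by (simp only: psi phi)
    also have "\<dots> = p0 \<cdot> idn P0" using h0(1-2) by (simp add: hom_iff)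
    finally show "p0 \<cdot> (phi \<cdot> psi) = p0 \<cdot> idn P0" .
  qed
  ultimately show ?thesis using phi psi by blast
qed

lemma po_iso:
  assumes "po a b a' b' B D E P" "po a b a0 b0 B D E P0"
  shows "\<exists>phi psi. phi \<in> Hom P P0 \<and> psi \<in> Hom P0 P \<and> psi \<cdot> phi = idn P \<and> phi \<cdot> psi = idn P0
     \<and> phi \<cdot> a' = a0 \<and> phi \<cdot> b' = b0 \<and> psi \<cdot> a0 = a' \<and> psi \<cdot> b0 = b'"
proof -
  have h: "a \<in> Hom B D" "b \<in> Hom B E" "a' \<in> Hom E P" "b' \<in> Hom D P" "b' \<cdot> a = a' \<cdot> b"
    using po_D[OF assms(1)] by auto
  have h0: "a0 \<in> Hom E P0" "b0 \<in> Hom D P0" "b0 \<cdot> a = a0 \<cdot> b"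
    using po_D[OF assms(2)] by auto
  obtain phi where phi: "phi \<in> Hom P P0" "phi \<cdot> b' = b0" "phi \<cdot> a' = a0"
    using po_desc[OF assms(1) h0(2) h0(1) h0(3)] by blast
  obtain psi where psi: "psi \<in> Hom P0 P" "psi \<cdot> b0 = b'" "psi \<cdot> a0 = a'"
    using po_desc[OF assms(2) h(4) h(3) h(5)] by blast
  have "psi \<cdot> phi = idn P"
  proof (rule po_uniq[OF assms(1)])
    show "psi \<cdot> phi \<in> Hom P P" "idn P \<in> Hom P P" using phi psi by (auto simp: hom_iff)
    have "(psi \<cdot> phi) \<cdot> b' = psi \<cdot> (phi \<cdot> b')" using phi(1) psi(1) h(1-4) by (simp add: hom_iff)
    also have "\<dots> = b'" by (simp only: psi phi)
    also have "\<dots> = idn P \<cdot> b'" using h(1-4) by (simp add: hom_iff)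
    finally show "(psi \<cdot> phi) \<cdot> b' = idn P \<cdot> b'" .
    have "(psi \<cdot> phi) \<cdot> a' = psi \<cdot> (phi \<cdot> a')" using phi(1) psi(1) h(1-4) by (simp add: hom_iff)
    also have "\<dots> = a'" by (simp only: psi phi)
    also have "\<dots> = idn P \<cdot> a'" using h(1-4) by (simp add: hom_iff)
    finally show "(psi \<cdot> phi) \<cdot> a' = idn P \<cdot> a'" .
  qed
  moreover have "phi \<cdot> psi = idn P0"
  proof (rule po_uniq[OF assms(2)])
    show "phi \<cdot> psi \<in> Hom P0 P0" "idn P0 \<in> Hom P0 P0" using phi psi by (auto simp: hom_iff)
    have "(phi \<cdot> psi) \<cdot> b0 = phi \<cdot> (psi \<cdot> b0)" using phi(1) psi(1) h0(1-2) by (simp add: hom_iff)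
    also have "\<dots> = b0" by (simp only: psi phi)
    also have "\<dots> = idn P0 \<cdot> b0" using h0(1-2) by (simp add: hom_iff)
    finally show "(phi \<cdot> psi) \<cdot> b0 = idn P0 \<cdot> b0" .
    have "(phi \<cdot> psi) \<cdot> a0 = phi \<cdot> (psi \<cdot> a0)" using phi(1) psi(1) h0(1-2) by (simp add: hom_iff)
    also have "\<dots> = a0" by (simp only: psi phi)
    also have "\<dots> = idn P0 \<cdot> a0" using h0(1-2) by (simp add: hom_iff)
    finally show "(phi \<cdot> psi) \<cdot> a0 = idn P0 \<cdot> a0" .
  qed
  ultimately show ?thesis using phi psi by blast
qed

lemma conf_iso_mid:
  assumes "(i, p) \<in> Conf" "i \<in> Hom K Y" "p \<in> Hom Y Z"
    "b \<in> Hom Y Y'" "b' \<in> Hom Y' Y" "b \<cdot> b' = idn Y'" "b' \<cdot> b = idn Y"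
  shows "(b \<cdot> i, p \<cdot> b') \<in> Conf"
proof -
  have K: "K \<in> Ob" "Z \<in> Ob" using assms by (auto simp: hom_iff)
  have "(b \<cdot> i \<cdot> idn K, idn Z \<cdot> p \<cdot> b') \<in> Conf"
    using conf_iso_simple[OF assms(1-3), of "idn K" K "idn K" b Y' b' "idn Z" Z "idn Z"] assms K
    by (simp add: hom_iff)
  then show ?thesis using assms by (simp add: hom_iff)
qed

lemma pb_defl:
  assumes "pb p f p' f' B D E P" "deflation C p"
  shows "deflation C p'"
proof -
  have h: "p \<in> Hom B D" "f \<in> Hom E D" "p' \<in> Hom P E"
    using pb_D[OF assms(1)] by auto
  obtain P0 p0 f0 where P0: "pb p f p0 f0 B D E P0" "deflation C p0" using R2[OF assms(2) h(1,2)] by blast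
  obtain phi psi where pp: "phi \<in> Hom P P0" "psi \<in> Hom P0 P" "psi \<cdot> phi = idn P" "phi \<cdot> psi = idn P0"
     "p0 \<cdot> phi = p'" using pb_iso[OF assms(1) P0(1)] by blast
  obtain k0 where k0: "(k0, p0) \<in> Conf" using P0(2) unfolding deflation_def by blast
  have p0h: "p0 \<in> Hom P0 E" using pb_D[OF P0(1)] by auto
  have k0h: "k0 \<in> Hom (sr k0) P0" using conf_ty[OF k0] p0h by (auto simp: hom_iff)
  have "(psi \<cdot> k0, p0 \<cdot> phi) \<in> Conf"
    using conf_iso_mid[OF k0 k0h p0h pp(2,1,3,4)] .
  then show ?thesis unfolding deflation_def pp(5) by blast
qed

lemma pb_ker:
  assumes "(k, p) \<in> Conf" "k \<in> Hom K B" "pb p f p' f' B D E P" "deflation C p'"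
  shows "\<exists>k'. k' \<in> Hom K P \<and> f' \<cdot> k' = k \<and> p' \<cdot> k' = zr K E \<and> (k', p') \<in> Conf"
proof -
  have h: "p \<in> Hom B D" "f \<in> Hom E D" "p' \<in> Hom P E" "f' \<in> Hom P B" "p \<cdot> f' = f \<cdot> p'"
    using pb_D[OF assms(3)] by auto
  have kk: "kern k p K B D" using conf_D[OF assms(1,2) h(1)] by blast
  have kz: "p \<cdot> k = zr K D" using kk unfolding kern_def by blast
  have O: "K \<in> Ob" "E \<in> Ob" "D \<in> Ob" "B \<in> Ob" "P \<in> Ob" using assms(2) h by (auto simp: hom_iff)
  have "p \<cdot> k = f \<cdot> zr K E" using kz h O by (simp add: hom_iff)
  moreover have "zr K E \<in> Hom K E" using O by (simp add: hom_iff)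
  ultimately obtain k' where k': "k' \<in> Hom K P" "f' \<cdot> k' = k" "p' \<cdot> k' = zr K E"
    using pb_lift[OF assms(3) assms(2)] by blast
  have "kern k' p' K P E"
    unfolding kern_def
  proof (intro conjI allI impI)
    show "k' \<in> Hom K P" "p' \<in> Hom P E" "p' \<cdot> k' = zr K E" using k' h by auto
    fix W t assume W: "W \<in> Ob" and t: "t \<in> Hom W P" and pt: "p' \<cdot> t = zr W E"
    have "p \<cdot> (f' \<cdot> t) = (p \<cdot> f') \<cdot> t" using h(1-4) t by (simp add: hom_iff)
    also have "\<dots> = (f \<cdot> p') \<cdot> t" by (simp only: h(5))
    also have "\<dots> = f \<cdot> (p' \<cdot> t)" using h(1-4) t by (simp add: hom_iff)
    also have "\<dots> = zr W D" using pt h W by (simp add: hom_iff)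
    finally have "p \<cdot> (f' \<cdot> t) = zr W D" .
    moreover have "f' \<cdot> t \<in> Hom W B" using h t by (auto simp: hom_iff)
    ultimately obtain u where u: "u \<in> Hom W K" "k \<cdot> u = f' \<cdot> t" using kern_lift[OF kk] by blast
    have "k' \<cdot> u = t"
    proof (rule pb_uniq[OF assms(3)])
      show "k' \<cdot> u \<in> Hom W P" using k' u by (auto simp: hom_iff)
      show "t \<in> Hom W P" by fact
      have "f' \<cdot> (k' \<cdot> u) = (f' \<cdot> k') \<cdot> u" using h(1-4) k'(1) u(1) by (simp add: hom_iff)
      also have "\<dots> = f' \<cdot> t" by (simp only: k' u)
      finally show "f' \<cdot> (k' \<cdot> u) = f' \<cdot> t" .
      have "p' \<cdot> (k' \<cdot> u) = (p' \<cdot> k') \<cdot> u" using h(1-4) k'(1) u(1) by (simp add: hom_iff)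
      also have "\<dots> = zr W E" using k' u O by (simp add: hom_iff)
      finally show "p' \<cdot> (k' \<cdot> u) = p' \<cdot> t" using pt by simp
    qed
    moreover have "v = u" if "v \<in> Hom W K" "k' \<cdot> v = t" for v
    proof (rule kern_mono[OF kk that(1) u(1)])
      have "k \<cdot> v = (f' \<cdot> k') \<cdot> v" by (simp only: k')
      also have "\<dots> = f' \<cdot> t" using h(1-4) k'(1) that by (simp add: hom_iff)
      finally show "k \<cdot> v = k \<cdot> u" using u by simp
    qed
    ultimately show "\<exists>!u. u \<in> Hom W K \<and> k' \<cdot> u = t" using u by blast
  qed
  then have "(k', p') \<in> Conf" using kern_conf[OF assms(4) h(3)] by blast
  then show ?thesis using k' by blast
qed

end


context dex
begin

lemma cx:
  assumes "a \<cdot> b = c" "a \<in> Mo" "b \<in> Mo" "tg b = sr a" "x \<in> Mo" "tg x = sr b"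
  shows "a \<cdot> (b \<cdot> x) = c \<cdot> x"
  using assms by (metis assoc)

lemma zobj_in:
  assumes "zero_object C Z0" "t \<in> Hom X Z0"
  shows "t = zr X Z0"
proof -
  have X: "X \<in> Ob" "Z0 \<in> Ob" using assms(2) by (auto simp: hom_iff)
  have "zr X Z0 \<in> Hom X Z0" using X by (simp add: hom_iff)
  then show ?thesis using assms X unfolding zero_object_def hom_def by blast
qed

lemma zobj_out:
  assumes "zero_object C Z0" "t \<in> Hom Z0 X"
  shows "t = zr Z0 X"
proof -
  have X: "X \<in> Ob" "Z0 \<in> Ob" using assms(2) by (auto simp: hom_iff)
  have "zr Z0 X \<in> Hom Z0 X" using X by (simp add: hom_iff)
  then show ?thesis using assms X unfolding zero_object_def hom_def by blast
qed

lemma zobj_mono: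
  assumes "zero_object C Z0" "kern m c K Z0 Q"
  shows "zero_object C K"
proof -
  have m: "m \<in> Hom K Z0" using assms(2) unfolding kern_def by blast
  have K: "K \<in> Ob" "Z0 \<in> Ob" using m by (auto simp: hom_iff)
  have into: "u = v" if "u \<in> Hom X K" "v \<in> Hom X K" for X u v
  proof (rule kern_mono[OF assms(2) that])
    have "m \<cdot> u \<in> Hom X Z0" "m \<cdot> v \<in> Hom X Z0" using that m by (auto simp: hom_iff)
    then show "m \<cdot> u = m \<cdot> v" using zobj_in[OF assms(1)] by metis
  qed
  have idz: "idn K = zr K K" using into[of "idn K" K "zr K K"] K by (simp add: hom_iff)
  show ?thesis unfolding zero_object_def
  proof (intro conjI ballI)
    show "K \<in> Ob" by fact
    fix X assume X: "X \<in> Ob"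
    show "\<exists>!f. f \<in> hom C X K"
    proof (rule ex1I[of _ "zr X K"])
      show zh: "zr X K \<in> Hom X K" using X K by (simp add: hom_iff)
      show "\<And>y. y \<in> Hom X K \<Longrightarrow> y = zr X K" using into zh by blast
    qed
    have tz: "t = zr K X" if "t \<in> Hom K X" for t
    proof -
      have "t = t \<cdot> idn K" using that by (simp add: hom_iff)
      also have "\<dots> = zr K X" unfolding idz using that K by (simp add: hom_iff)
      finally show ?thesis .
    qed
    show "\<exists>!f. f \<in> hom C K X"
      by (rule ex1I[of _ "zr K X"]) (use X K tz in \<open>auto simp: hom_iff\<close>)
  qed
qed

lemma ex_zobj: "\<exists>Z0. zero_object C Z0"
  using ADD unfolding additive_def by blast

lemma zobj_ob: "zero_object C Z0 \<Longrightarrow> Z0 \<in> Ob"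
  unfolding zero_object_def by blast

lemma R0: "zero_object C Z0 \<Longrightarrow> deflation C (idn Z0)"
  using DE unfolding deflation_exact_def by blast

lemma R1: "deflation C p \<Longrightarrow> deflation C q \<Longrightarrow> tg p = sr q \<Longrightarrow> deflation C (q \<cdot> p)"
  using DE unfolding deflation_exact_def by blast

lemma A1: "(i, p) \<in> Conf \<Longrightarrow> tg i \<in> A \<longleftrightarrow> (sr i \<in> A \<and> tg p \<in> A)"
  using AP unfolding admissibly_deflation_percolating_def by blast

lemma A2: "f \<in> Mo \<Longrightarrow> tg f \<in> A \<Longrightarrow> (\<exists>e m. deflation C e \<and> inflation C m
        \<and> sr e = sr f \<and> tg e = sr m \<and> tg m = tg f \<and> sr m \<in> A \<and> m \<cdot> e = f)"
  using AP unfolding admissibly_deflation_percolating_def by blast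

lemma A_ne: "\<exists>a. a \<in> A" "A \<subseteq> Ob"
  using AP unfolding admissibly_deflation_percolating_def by blast+

lemma defl_mo: "deflation C p \<Longrightarrow> p \<in> Mo"
  unfolding deflation_def using conf_ty by blast
lemma infl_mo: "inflation C p \<Longrightarrow> p \<in> Mo"
  unfolding inflation_def using conf_ty by blast

lemma zobj_A: "\<exists>K. zero_object C K \<and> K \<in> A"
proof -
  obtain Z0 where Z0: "zero_object C Z0" using ex_zobj by blast
  obtain a where a: "a \<in> A" using A_ne by blast
  have aO: "a \<in> Ob" "Z0 \<in> Ob" using a A_ne zobj_ob[OF Z0] by auto
  have "pb (idn Z0) (zr a Z0) (idn a) (zr a Z0) Z0 Z0 a a"
    unfolding pb_def
  proof (intro conjI allI impI)
    show "idn Z0 \<in> Hom Z0 Z0" "zr a Z0 \<in> Hom a Z0" "idn a \<in> Hom a a" "zr a Z0 \<in> Hom a Z0"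
      using aO by (auto simp: hom_iff)
    show "idn Z0 \<cdot> zr a Z0 = zr a Z0 \<cdot> idn a" using aO by simp
    fix W u v assume W: "W \<in> Ob" and u: "u \<in> Hom W Z0" and v: "v \<in> Hom W a"
    have uz: "u = zr W Z0" using zobj_in[OF Z0 u] .
    show "\<exists>!w. w \<in> Hom W a \<and> zr a Z0 \<cdot> w = u \<and> idn a \<cdot> w = v"
    proof (rule ex1I[of _ v])
      have "zr a Z0 \<cdot> v = zr W Z0" using v aO by (simp add: hom_iff)
      then show "v \<in> Hom W a \<and> zr a Z0 \<cdot> v = u \<and> idn a \<cdot> v = v" using v uz by (simp add: hom_iff)
      fix y assume y: "y \<in> Hom W a \<and> zr a Z0 \<cdot> y = u \<and> idn a \<cdot> y = v"
      have "y \<in> Mo" "tg y = a" "idn a \<cdot> y = v" using y unfolding hom_iff by blast+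
      then show "y = v" using id_l[of y a] by simp
    qed
  qed
  then have "deflation C (idn a)" using pb_defl R0[OF Z0] by blast
  then obtain k where k: "(k, idn a) \<in> Conf" unfolding deflation_def by blast
  have kh: "k \<in> Hom (sr k) a" "idn a \<in> Hom a a" using conf_ty[OF k] aO by (auto simp: hom_iff)
  have kk: "kern k (idn a) (sr k) a a" using conf_D[OF k kh] by simp
  have kA: "sr k \<in> A" using A1[OF k] a aO kh(1) by (auto simp: hom_iff)
  have "idn a \<cdot> k = zr (sr k) a" using kk unfolding kern_def by blast
  then have kz: "k = zr (sr k) a" using kh by (simp add: hom_iff)
  have K: "sr k \<in> Ob" using kh by (auto simp: hom_iff)
  have "zero_object C (sr k)" unfolding zero_object_def
  proof (intro conjI ballI)
    show "sr k \<in> Ob" by fact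
    fix X assume X: "X \<in> Ob"
    have into: "u = v" if "u \<in> Hom X (sr k)" "v \<in> Hom X (sr k)" for u v
    proof (rule kern_mono[OF kk that])
      show "k \<cdot> u = k \<cdot> v" using that X K aO by (subst (1 2) kz) (simp add: hom_iff)
    qed
    show "\<exists>!f. f \<in> hom C X (sr k)"
    proof (rule ex1I[of _ "zr X (sr k)"])
      show zh: "zr X (sr k) \<in> Hom X (sr k)" using X K by (simp add: hom_iff)
      show "\<And>y. y \<in> Hom X (sr k) \<Longrightarrow> y = zr X (sr k)" using into zh by blast
    qed
    have idz: "idn (sr k) = zr (sr k) (sr k)"
    proof (rule kern_mono[OF kk])
      show "idn (sr k) \<in> Hom (sr k) (sr k)" "zr (sr k) (sr k) \<in> Hom (sr k) (sr k)" using K by (auto simp: hom_iff)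
      show "k \<cdot> idn (sr k) = k \<cdot> zr (sr k) (sr k)" using K aO by (subst (1 2) kz) (simp add: hom_iff)
    qed
    have tz: "t = zr (sr k) X" if "t \<in> Hom (sr k) X" for t
    proof -
      have "t = t \<cdot> idn (sr k)" using that by (simp add: hom_iff)
      also have "\<dots> = zr (sr k) X" unfolding idz using that K by (simp add: hom_iff)
      finally show ?thesis .
    qed
    show "\<exists>!f. f \<in> hom C (sr k) X"
      by (rule ex1I[of _ "zr (sr k) X"]) (use X K tz in \<open>auto simp: hom_iff\<close>)
  qed
  then show ?thesis using kA by blast
qed

lemma to_zero_defl:
  assumes "X \<in> Ob"
  shows "\<exists>Z0. zero_object C Z0 \<and> deflation C (zr X Z0)"
proof -
  obtain K where K: "zero_object C K" "K \<in> A" using zobj_A by blast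
  have KO: "K \<in> Ob" using zobj_ob[OF K(1)] .
  obtain e m where em: "deflation C e" "inflation C m" "sr e = X" "tg e = sr m" "tg m = K"
    "m \<cdot> e = zr X K" using A2[of "zr X K"] K KO assms by auto
  obtain c where c: "(m, c) \<in> Conf" using em(2) unfolding inflation_def by blast
  have mk: "kern m c (sr m) K (tg c)" using conf_D'[OF c] em by simp
  have Z: "zero_object C (sr m)" using zobj_mono[OF K(1) mk] .
  have "e \<in> Hom X (sr m)" using em defl_mo by (auto simp: hom_iff)
  then have "e = zr X (sr m)" using zobj_in[OF Z] by blast
  then show ?thesis using Z em by metis
qed

definition bip where
  "bip X1 X2 S p1 p2 i1 i2 \<longleftrightarrow> biproduct C X1 X2 S p1 p2 i1 i2"

lemma bip_ex: "X1 \<in> Ob \<Longrightarrow> X2 \<in> Ob \<Longrightarrow> \<exists>S p1 p2 i1 i2. bip X1 X2 S p1 p2 i1 i2"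
  using ADD unfolding additive_def bip_def by blast

lemma bip_D:
  assumes "bip X1 X2 S p1 p2 i1 i2"
  shows "S \<in> Ob" "p1 \<in> Hom S X1" "p2 \<in> Hom S X2" "i1 \<in> Hom X1 S" "i2 \<in> Hom X2 S"
    "p1 \<cdot> i1 = idn X1" "p2 \<cdot> i2 = idn X2" "p2 \<cdot> i1 = zr X1 X2" "p1 \<cdot> i2 = zr X2 X1"
    "i1 \<cdot> p1 \<oplus> i2 \<cdot> p2 = idn S"
  using assms unfolding bip_def biproduct_def by auto

lemma bip_simps:
  assumes "bip X1 X2 S p1 p2 i1 i2"
  shows "x \<in> Mo \<Longrightarrow> tg x = X1 \<Longrightarrow> p1 \<cdot> (i1 \<cdot> x) = x"
    "x \<in> Mo \<Longrightarrow> tg x = X2 \<Longrightarrow> p2 \<cdot> (i2 \<cdot> x) = x"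
    "x \<in> Mo \<Longrightarrow> tg x = X1 \<Longrightarrow> p2 \<cdot> (i1 \<cdot> x) = zr (sr x) X2"
    "x \<in> Mo \<Longrightarrow> tg x = X2 \<Longrightarrow> p1 \<cdot> (i2 \<cdot> x) = zr (sr x) X1"
    "p1 \<cdot> i1 = idn X1" "p2 \<cdot> i2 = idn X2" "p2 \<cdot> i1 = zr X1 X2" "p1 \<cdot> i2 = zr X2 X1"
proof -
  note b = bip_D[OF assms]
  show "p1 \<cdot> i1 = idn X1" "p2 \<cdot> i2 = idn X2" "p2 \<cdot> i1 = zr X1 X2" "p1 \<cdot> i2 = zr X2 X1"
    using b by auto
  show "x \<in> Mo \<Longrightarrow> tg x = X1 \<Longrightarrow> p1 \<cdot> (i1 \<cdot> x) = x"
    using cx[OF b(6), of x] b(2,4) by (simp add: hom_iff)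
  show "x \<in> Mo \<Longrightarrow> tg x = X2 \<Longrightarrow> p2 \<cdot> (i2 \<cdot> x) = x"
    using cx[OF b(7), of x] b(3,5) by (simp add: hom_iff)
  show "x \<in> Mo \<Longrightarrow> tg x = X1 \<Longrightarrow> p2 \<cdot> (i1 \<cdot> x) = zr (sr x) X2"
    using cx[OF b(8), of x] b(2,3,4) by (auto simp: hom_iff)
  show "x \<in> Mo \<Longrightarrow> tg x = X2 \<Longrightarrow> p1 \<cdot> (i2 \<cdot> x) = zr (sr x) X1"
    using cx[OF b(9), of x] b(2,3,5) by (auto simp: hom_iff)
qed

lemma bip_decomp:
  assumes "bip X1 X2 S p1 p2 i1 i2" "w \<in> Hom W S"
  shows "w = i1 \<cdot> (p1 \<cdot> w) \<oplus> i2 \<cdot> (p2 \<cdot> w)"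
proof -
  note b = bip_D[OF assms(1)]
  have "w = idn S \<cdot> w" using assms by (simp add: hom_iff)
  also have "\<dots> = (i1 \<cdot> p1 \<oplus> i2 \<cdot> p2) \<cdot> w" by (simp only: b(10))
  also have "\<dots> = i1 \<cdot> (p1 \<cdot> w) \<oplus> i2 \<cdot> (p2 \<cdot> w)" using b(1-5) assms(2) by (simp add: hom_iff)
  finally show ?thesis .
qed

lemma bip_decomp_out:
  assumes "bip X1 X2 S p1 p2 i1 i2" "w \<in> Hom S W"
  shows "w = w \<cdot> (i1 \<cdot> p1) \<oplus> w \<cdot> (i2 \<cdot> p2)"
proof -
  note b = bip_D[OF assms(1)]
  have "w = w \<cdot> idn S" using assms by (simp add: hom_iff)
  also have "\<dots> = w \<cdot> (i1 \<cdot> p1 \<oplus> i2 \<cdot> p2)" by (simp only: b(10))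
  also have "\<dots> = w \<cdot> (i1 \<cdot> p1) \<oplus> w \<cdot> (i2 \<cdot> p2)" using b(1-5) assms(2) by (simp add: hom_iff)
  finally show ?thesis .
qed

lemma bip_eq_into:
  assumes "bip X1 X2 S p1 p2 i1 i2" "w1 \<in> Hom W S" "w2 \<in> Hom W S"
    "p1 \<cdot> w1 = p1 \<cdot> w2" "p2 \<cdot> w1 = p2 \<cdot> w2"
  shows "w1 = w2"
  using bip_decomp[OF assms(1,2)] bip_decomp[OF assms(1,3)] assms(4,5) by simp

lemma bip_eq_out:
  assumes "bip X1 X2 S p1 p2 i1 i2" "w1 \<in> Hom S W" "w2 \<in> Hom S W"
    "w1 \<cdot> i1 = w2 \<cdot> i1" "w1 \<cdot> i2 = w2 \<cdot> i2"
  shows "w1 = w2"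
proof -
  note b = bip_D[OF assms(1)]
  have "w1 = (w1 \<cdot> i1) \<cdot> p1 \<oplus> (w1 \<cdot> i2) \<cdot> p2" using bip_decomp_out[OF assms(1,2)] b assms(2)
    by (simp add: hom_iff)
  also have "\<dots> = (w2 \<cdot> i1) \<cdot> p1 \<oplus> (w2 \<cdot> i2) \<cdot> p2" by (simp only: assms(4,5))
  also have "\<dots> = w2" using bip_decomp_out[OF assms(1,3)] b assms(3)
    by (simp add: hom_iff)
  finally show ?thesis .
qed

lemma bip_kern:
  assumes "bip X1 X2 S p1 p2 i1 i2"
  shows "kern i1 p2 X1 S X2"
  unfolding kern_def
proof (intro conjI allI impI)
  note b = bip_D[OF assms]
  note bs = bip_simps[OF assms]
  show "i1 \<in> Hom X1 S" "p2 \<in> Hom S X2" "p2 \<cdot> i1 = zr X1 X2" using b by auto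
  fix W t assume W: "W \<in> Ob" and t: "t \<in> Hom W S" and pt: "p2 \<cdot> t = zr W X2"
  have "t = i1 \<cdot> (p1 \<cdot> t) \<oplus> i2 \<cdot> (p2 \<cdot> t)" using bip_decomp[OF assms t] .
  also have "\<dots> = i1 \<cdot> (p1 \<cdot> t)" unfolding pt using b t W by (simp add: hom_iff)
  finally have e: "i1 \<cdot> (p1 \<cdot> t) = t" by simp
  have u: "p1 \<cdot> t \<in> Hom W X1" using b t by (auto simp: hom_iff)
  show "\<exists>!u. u \<in> Hom W X1 \<and> i1 \<cdot> u = t"
  proof (rule ex1I[of _ "p1 \<cdot> t"])
    show "p1 \<cdot> t \<in> Hom W X1 \<and> i1 \<cdot> (p1 \<cdot> t) = t" using u e by simp
    fix v assume v: "v \<in> Hom W X1 \<and> i1 \<cdot> v = t"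
    show "v = p1 \<cdot> t" using v bs(1)[of v] unfolding hom_iff by metis
  qed
qed

lemma bip_defl2:
  assumes "bip X1 X2 S p1 p2 i1 i2"
  shows "deflation C p2"
proof -
  note b = bip_D[OF assms]
  note bs = bip_simps[OF assms]
  have O: "X1 \<in> Ob" "X2 \<in> Ob" using b by (auto simp: hom_iff)
  obtain Z0 where Z0: "zero_object C Z0" "deflation C (zr X1 Z0)" using to_zero_defl[OF O(1)] by blast
  have ZO: "Z0 \<in> Ob" using zobj_ob[OF Z0(1)] .
  have "pb (zr X1 Z0) (zr X2 Z0) p2 p1 X1 Z0 X2 S"
    unfolding pb_def
  proof (intro conjI allI impI)
    show "zr X1 Z0 \<in> Hom X1 Z0" "zr X2 Z0 \<in> Hom X2 Z0" "p2 \<in> Hom S X2" "p1 \<in> Hom S X1"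
      using O ZO b by (auto simp: hom_iff)
    show "zr X1 Z0 \<cdot> p1 = zr X2 Z0 \<cdot> p2" using O ZO b by (simp add: hom_iff)
    fix W u v assume W: "W \<in> Ob" and u: "u \<in> Hom W X1" and v: "v \<in> Hom W X2"
    show "\<exists>!w. w \<in> Hom W S \<and> p1 \<cdot> w = u \<and> p2 \<cdot> w = v"
    proof (rule ex1I[of _ "i1 \<cdot> u \<oplus> i2 \<cdot> v"])
      show "i1 \<cdot> u \<oplus> i2 \<cdot> v \<in> Hom W S \<and> p1 \<cdot> (i1 \<cdot> u \<oplus> i2 \<cdot> v) = u \<and> p2 \<cdot> (i1 \<cdot> u \<oplus> i2 \<cdot> v) = v"
        using u v b bs W by (simp add: hom_iff)
      fix w assume w: "w \<in> Hom W S \<and> p1 \<cdot> w = u \<and> p2 \<cdot> w = v"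
      then show "w = i1 \<cdot> u \<oplus> i2 \<cdot> v" using bip_decomp[OF assms, of w W] by simp
    qed
  qed
  then show ?thesis using pb_defl Z0(2) by blast
qed

lemma bip_swap:
  assumes "bip X1 X2 S p1 p2 i1 i2"
  shows "bip X2 X1 S p2 p1 i2 i1"
  using bip_D[OF assms] unfolding bip_def biproduct_def
  by (auto simp: add_comm[of "i1 \<cdot> p1" "i2 \<cdot> p2"] hom_iff)

end


context dex
begin

lemma conf_defl: "(i, p) \<in> Conf \<Longrightarrow> deflation C p" unfolding deflation_def by blast
lemma conf_infl: "(i, p) \<in> Conf \<Longrightarrow> inflation C i" unfolding inflation_def by blast

lemma PO_CONF:
  assumes ac: "(a, ca) \<in> Conf" "a \<in> Hom B D" "ca \<in> Hom D Q"
    and sb: "(s, b) \<in> Conf" "s \<in> Hom U B" "b \<in> Hom B E" and EA: "E \<in> A"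
  shows "\<exists>P a' d pi. po a b a' d B D E P \<and> deflation C d \<and> pi \<in> Hom P Q \<and> pi \<cdot> d = ca
     \<and> pi \<cdot> a' = zr E Q \<and> (a', pi) \<in> Conf \<and> (a \<cdot> s, d) \<in> Conf"
proof -
  obtain P a' d where P: "po a b a' d B D E P" "deflation C d" "inflation C a'"
    using A3[OF conf_infl[OF ac(1)] conf_defl[OF sb(1)] ac(2) sb(3) EA] by blast
  have h: "a' \<in> Hom E P" "d \<in> Hom D P" "d \<cdot> a = a' \<cdot> b" using po_D[OF P(1)] by auto
  have ka: "kern a ca B D Q" "cok ca a B D Q" using conf_D[OF ac] by auto
  have ks: "kern s b U B E" using conf_D[OF sb(1,2,3)] by auto
  have caz: "ca \<cdot> a = zr B Q" using ka(1) unfolding kern_def by blast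
  have bsz: "b \<cdot> s = zr U E" using ks unfolding kern_def by blast
  have O: "B \<in> Ob" "D \<in> Ob" "E \<in> Ob" "P \<in> Ob" "Q \<in> Ob" "U \<in> Ob"
    using ac(2,3) sb(2,3) h(1) by (auto simp: hom_iff)
  have zQ: "zr E Q \<in> Hom E Q" using O by (simp add: hom_iff)
  have "ca \<cdot> a = zr E Q \<cdot> b" using caz sb(3) O by (simp add: hom_iff)
  then obtain pi where pi: "pi \<in> Hom P Q" "pi \<cdot> d = ca" "pi \<cdot> a' = zr E Q"
    using po_desc[OF P(1) ac(3) zQ] by blast
  have cpi: "cok pi a' E P Q"
    unfolding cok_def
  proof (intro conjI allI impI)
    show "a' \<in> Hom E P" "pi \<in> Hom P Q" "pi \<cdot> a' = zr E Q" using h pi by auto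
    fix W t assume W: "W \<in> Ob" and t: "t \<in> Hom P W" and ta: "t \<cdot> a' = zr E W"
    have "(t \<cdot> d) \<cdot> a = t \<cdot> (d \<cdot> a)" using t h(1,2) ac(2) by (simp add: hom_iff)
    also have "\<dots> = t \<cdot> (a' \<cdot> b)" by (simp only: h(3))
    also have "\<dots> = (t \<cdot> a') \<cdot> b" using t h(1,2) sb(3) by (simp add: hom_iff)
    also have "\<dots> = zr B W" using ta sb(3) W by (simp add: hom_iff)
    finally have e: "(t \<cdot> d) \<cdot> a = zr B W" .
    have tdh: "t \<cdot> d \<in> Hom D W" using t h by (auto simp: hom_iff)
    obtain u where u: "u \<in> Hom Q W" "u \<cdot> ca = t \<cdot> d" using cok_desc[OF ka(2) tdh e] by blast
    have eq: "u \<cdot> pi = t"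
    proof (rule po_uniq[OF P(1)])
      show "u \<cdot> pi \<in> Hom P W" "t \<in> Hom P W" using u pi t by (auto simp: hom_iff)
      have "(u \<cdot> pi) \<cdot> d = u \<cdot> (pi \<cdot> d)" using u(1) pi(1) h(2) by (simp add: hom_iff)
      also have "\<dots> = t \<cdot> d" by (simp only: pi(2) u(2))
      finally show "(u \<cdot> pi) \<cdot> d = t \<cdot> d" .
      have "(u \<cdot> pi) \<cdot> a' = u \<cdot> (pi \<cdot> a')" using u(1) pi(1) h(1) by (simp add: hom_iff)
      also have "\<dots> = zr E W" unfolding pi(3) using u(1) O W by (simp add: hom_iff)
      finally show "(u \<cdot> pi) \<cdot> a' = t \<cdot> a'" using ta by simp
    qed
    show "\<exists>!u. u \<in> Hom Q W \<and> u \<cdot> pi = t"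
    proof (rule ex1I[of _ u])
      show "u \<in> Hom Q W \<and> u \<cdot> pi = t" using u eq by simp
      fix v assume v: "v \<in> Hom Q W \<and> v \<cdot> pi = t"
      show "v = u"
      proof (rule cok_epi[OF ka(2)])
        show "v \<in> Hom Q W" "u \<in> Hom Q W" using u v by auto
        have "v \<cdot> ca = v \<cdot> (pi \<cdot> d)" by (simp only: pi(2))
        also have "\<dots> = (v \<cdot> pi) \<cdot> d" using conjunct1[OF v] pi(1) h(2) by (simp add: hom_iff)
        also have "\<dots> = t \<cdot> d" using v by simp
        finally show "v \<cdot> ca = u \<cdot> ca" using u by simp
      qed
    qed
  qed
  have api: "(a', pi) \<in> Conf" using cok_conf[OF P(3) h(1) cpi] .
  have ka': "kern a' pi E P Q" using conf_D[OF api h(1) pi(1)] by blast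
  have kas: "kern (a \<cdot> s) d U D P"
    unfolding kern_def
  proof (intro conjI allI impI)
    show "a \<cdot> s \<in> Hom U D" "d \<in> Hom D P" using ac(2) sb(2) h by (auto simp: hom_iff)
    have "d \<cdot> (a \<cdot> s) = (d \<cdot> a) \<cdot> s" using ac(2) sb(2) h(1,2) by (simp add: hom_iff)
    also have "\<dots> = (a' \<cdot> b) \<cdot> s" by (simp only: h(3))
    also have "\<dots> = a' \<cdot> (b \<cdot> s)" using sb(2,3) h(1,2) by (simp add: hom_iff)
    also have "\<dots> = zr U P" unfolding bsz using h(1) O by (simp add: hom_iff)
    finally show "d \<cdot> (a \<cdot> s) = zr U P" .
    fix W t assume W: "W \<in> Ob" and t: "t \<in> Hom W D" and dt: "d \<cdot> t = zr W P"
    have "ca \<cdot> t = (pi \<cdot> d) \<cdot> t" by (simp only: pi(2))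
    also have "\<dots> = pi \<cdot> (d \<cdot> t)" using pi(1) h(2) t by (simp add: hom_iff)
    also have "\<dots> = zr W Q" unfolding dt using pi(1) W by (simp add: hom_iff)
    finally have "ca \<cdot> t = zr W Q" .
    then obtain u where u: "u \<in> Hom W B" "a \<cdot> u = t" using kern_lift[OF ka(1) t] by blast
    have "a' \<cdot> (b \<cdot> u) = (a' \<cdot> b) \<cdot> u" using h(1) sb(3) u(1) by (simp add: hom_iff)
    also have "\<dots> = (d \<cdot> a) \<cdot> u" by (simp only: h(3))
    also have "\<dots> = d \<cdot> (a \<cdot> u)" using h(2) ac(2) u(1) by (simp add: hom_iff)
    also have "\<dots> = zr W P" unfolding u(2) dt ..
    also have "\<dots> = a' \<cdot> zr W E" using h(1) O W by (simp add: hom_iff)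
    finally have "a' \<cdot> (b \<cdot> u) = a' \<cdot> zr W E" .
    then have buz: "b \<cdot> u = zr W E"
      using kern_mono[OF ka', of "b \<cdot> u" W "zr W E"] sb(3) u(1) O W by (simp add: hom_iff)
    have buh: "b \<cdot> u \<in> Hom W E" using sb(3) u(1) by (auto simp: hom_iff)
    obtain v where v: "v \<in> Hom W U" "s \<cdot> v = u" using kern_lift[OF ks u(1)] buz by blast
    have tv: "(a \<cdot> s) \<cdot> v = t" using v u ac(2) sb(2) by (simp add: hom_iff)
    show "\<exists>!u. u \<in> Hom W U \<and> (a \<cdot> s) \<cdot> u = t"
    proof (rule ex1I[of _ v])
      show "v \<in> Hom W U \<and> (a \<cdot> s) \<cdot> v = t" using v tv by simp
      fix w assume w: "w \<in> Hom W U \<and> (a \<cdot> s) \<cdot> w = t"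
      have w1: "w \<in> Hom W U" "(a \<cdot> s) \<cdot> w = t" using w by auto
      have "a \<cdot> (s \<cdot> w) = (a \<cdot> s) \<cdot> w" using w1(1) ac(2) sb(2) by (simp add: hom_iff)
      also have "\<dots> = (a \<cdot> s) \<cdot> v" using w1(2) tv by simp
      also have "\<dots> = a \<cdot> (s \<cdot> v)" using v(1) ac(2) sb(2) by (simp add: hom_iff)
      finally have "a \<cdot> (s \<cdot> w) = a \<cdot> (s \<cdot> v)" .
      then have "s \<cdot> w = s \<cdot> v"
        using kern_mono[OF ka(1), of "s \<cdot> w" W "s \<cdot> v"] w v(1) sb(2) by (auto simp: hom_iff)
      then show "w = v" using kern_mono[OF ks, of w W v] w v(1) by blast
    qed
  qed
  have "(a \<cdot> s, d) \<in> Conf" using kern_conf[OF P(2) h(2) kas] .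
  then show ?thesis using P(1,2) pi api by blast
qed

end


context dex
begin

lemma add_neg_swap[simp]:
  assumes "a \<in> Mo" "b \<in> Mo" "sr a = sr b" "tg a = tg b"
  shows "a \<oplus> (b \<oplus> \<ominus>a) = b"
proof -
  have "b \<oplus> \<ominus>a = \<ominus>a \<oplus> b" using assms by (intro add_comm) auto
  then show ?thesis using assms by simp
qed

lemma sub_zero:
  assumes "a \<in> Hom X Y" "b \<in> Hom X Y" "a \<oplus> \<ominus>b = zr X Y"
  shows "a = b"
proof -
  have "a = (a \<oplus> \<ominus>b) \<oplus> b" using assms(1,2) by (simp add: hom_iff)
  also have "\<dots> = zr X Y \<oplus> b" by (simp only: assms(3))
  also have "\<dots> = b" using assms(2) by (simp add: hom_iff)
  finally show ?thesis .
qed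

lemma FIVE:
  assumes ip: "(i, p) \<in> Conf" "i \<in> Hom X Y" "p \<in> Hom Y Z"
    and kr: "(k, r) \<in> Conf" "k \<in> Hom X R" "r \<in> Hom R Z"
    and phi: "phi \<in> Hom Y R" "phi \<cdot> i = k" "r \<cdot> phi = p"
  shows "\<exists>psi. psi \<in> Hom R Y \<and> psi \<cdot> phi = idn Y \<and> phi \<cdot> psi = idn R"
proof -
  have O: "X \<in> Ob" "Y \<in> Ob" "Z \<in> Ob" "R \<in> Ob" using ip kr by (auto simp: hom_iff)
  have kip: "kern i p X Y Z" using conf_D[OF ip] by blast
  have kkr: "kern k r X R Z" using conf_D[OF kr] by blast
  have ipz: "p \<cdot> i = zr X Z" using kip unfolding kern_def by blast
  have mz: "t = zr V Y" if t: "t \<in> Hom V Y" "phi \<cdot> t = zr V R" for t V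
  proof -
    have V: "V \<in> Ob" using t by (auto simp: hom_iff)
    have "p \<cdot> t = (r \<cdot> phi) \<cdot> t" by (simp only: phi(3))
    also have "\<dots> = r \<cdot> (phi \<cdot> t)" using kr(3) phi(1) t(1) by (simp add: hom_iff)
    also have "\<dots> = zr V Z" unfolding t(2) using kr(3) V by (simp add: hom_iff)
    finally have "p \<cdot> t = zr V Z" .
    then obtain u where u: "u \<in> Hom V X" "i \<cdot> u = t" using kern_lift[OF kip t(1)] by blast
    have "k \<cdot> u = (phi \<cdot> i) \<cdot> u" by (simp only: phi(2))
    also have "\<dots> = phi \<cdot> (i \<cdot> u)" using phi(1) ip(2) u(1) by (simp add: hom_iff)
    also have "\<dots> = zr V R" unfolding u(2) t(2) ..
    also have "\<dots> = k \<cdot> zr V X" using kr(2) V by (simp add: hom_iff)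
    finally have "u = zr V X" using kern_mono[OF kkr u(1), of "zr V X"] V O by (simp add: hom_iff)
    then show "t = zr V Y" using u(2) ip(2) V by (simp add: hom_iff)
  qed
  obtain W wR wY where W: "pb p r wR wY Y Z R W" "deflation C wR"
    using R2[OF conf_defl[OF ip(1)] ip(3) kr(3)] by blast
  have wh: "wR \<in> Hom W R" "wY \<in> Hom W Y" "p \<cdot> wY = r \<cdot> wR" using pb_D[OF W(1)] by auto
  obtain ka where ka: "ka \<in> Hom X W" "wY \<cdot> ka = i" "wR \<cdot> ka = zr X R" "(ka, wR) \<in> Conf"
    using pb_ker[OF ip(1,2) W] by blast
  have cka: "cok wR ka X W R" using conf_D[OF ka(4) ka(1) wh(1)] by blast
  define e where "e = wR \<oplus> \<ominus>(phi \<cdot> wY)"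
  have eh: "e \<in> Hom W R" unfolding e_def using wh phi(1) by (auto simp: hom_iff)
  have "r \<cdot> e = r \<cdot> wR \<oplus> \<ominus>(r \<cdot> (phi \<cdot> wY))" unfolding e_def using wh phi(1) kr(3) by (simp add: hom_iff)
  also have "r \<cdot> (phi \<cdot> wY) = p \<cdot> wY" using cx[OF phi(3)] wh phi(1) kr(3) by (simp add: hom_iff)
  also have "r \<cdot> wR \<oplus> \<ominus>(p \<cdot> wY) = zr W Z" unfolding wh(3) using wh kr(3) by (simp add: hom_iff)
  finally have "r \<cdot> e = zr W Z" .
  then obtain eps where eps: "eps \<in> Hom W X" "k \<cdot> eps = e" using kern_lift[OF kkr eh] by blast
  define nu where "nu = wY \<oplus> i \<cdot> eps"
  have nuh: "nu \<in> Hom W Y" unfolding nu_def using wh eps ip(2) by (auto simp: hom_iff)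
  have "phi \<cdot> nu = phi \<cdot> wY \<oplus> phi \<cdot> (i \<cdot> eps)" unfolding nu_def using wh eps(1) ip(2) phi(1) by (simp add: hom_iff)
  also have "phi \<cdot> (i \<cdot> eps) = e" using cx[OF phi(2)] eps ip(2) phi(1) by (simp add: hom_iff)
  also have "phi \<cdot> wY \<oplus> e = wR" unfolding e_def using wh phi(1) by (simp add: hom_iff)
  finally have phinu: "phi \<cdot> nu = wR" .
  have "phi \<cdot> (nu \<cdot> ka) = (phi \<cdot> nu) \<cdot> ka" using phi(1) nuh ka(1) by (simp add: hom_iff)
  also have "\<dots> = zr X R" unfolding phinu ka(3) ..
  finally have "nu \<cdot> ka = zr X Y" using mz[of "nu \<cdot> ka" X] nuh ka(1) by (auto simp: hom_iff)
  then obtain psi where psi: "psi \<in> Hom R Y" "psi \<cdot> wR = nu" using cok_desc[OF cka nuh] by blast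
  have pp: "phi \<cdot> psi = idn R"
  proof (rule cok_epi[OF cka])
    show "phi \<cdot> psi \<in> Hom R R" "idn R \<in> Hom R R" using phi(1) psi(1) O by (auto simp: hom_iff)
    have "(phi \<cdot> psi) \<cdot> wR = phi \<cdot> (psi \<cdot> wR)" using phi(1) psi(1) wh(1) by (simp add: hom_iff)
    also have "\<dots> = wR" unfolding psi(2) phinu ..
    also have "\<dots> = idn R \<cdot> wR" using wh(1) by (simp add: hom_iff)
    finally show "(phi \<cdot> psi) \<cdot> wR = idn R \<cdot> wR" .
  qed
  have "phi \<cdot> (psi \<cdot> phi \<oplus> \<ominus>(idn Y)) = (phi \<cdot> psi) \<cdot> phi \<oplus> \<ominus>phi"
    using phi(1) psi(1) O by (simp add: hom_iff)
  also have "\<dots> = zr Y R" unfolding pp using phi(1) by (simp add: hom_iff)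
  finally have "psi \<cdot> phi \<oplus> \<ominus>(idn Y) = zr Y Y"
    using mz[of "psi \<cdot> phi \<oplus> \<ominus>(idn Y)" Y] phi(1) psi(1) O by (auto simp: hom_iff)
  then have "psi \<cdot> phi = idn Y" using sub_zero[of "psi \<cdot> phi" Y Y "idn Y"] phi(1) psi(1) O by (auto simp: hom_iff)
  then show ?thesis using psi(1) pp by blast
qed

end


context dex
begin

lemma KL2:
  assumes ip: "(i, p) \<in> Conf" "i \<in> Hom X Y" "p \<in> Hom Y Z"
    and iq: "(i2, q) \<in> Conf" "i2 \<in> Hom X' Q" "q \<in> Hom Q Z"
    and jf: "(j, f) \<in> Conf" "j \<in> Hom K X" "f \<in> Hom X X'" and KA: "K \<in> A"
    and g1: "g1 \<in> Hom Y Q" "g1 \<cdot> i = i2 \<cdot> f" "q \<cdot> g1 = p"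
  shows "(i \<cdot> j, g1) \<in> Conf"
proof -
  have O: "X \<in> Ob" "Y \<in> Ob" "Z \<in> Ob" "X' \<in> Ob" "Q \<in> Ob" "K \<in> Ob"
    using ip iq jf by (auto simp: hom_iff)
  have kip: "kern i p X Y Z" using conf_D[OF ip] by blast
  have kiq: "kern i2 q X' Q Z" using conf_D[OF iq] by blast
  have kjf: "kern j f K X X'" using conf_D[OF jf] by blast
  have qi2: "q \<cdot> i2 = zr X' Z" using kiq unfolding kern_def by blast
  have fj: "f \<cdot> j = zr K X'" using kjf unfolding kern_def by blast
  note qi2x = cx[OF qi2] and g1x = cx[OF g1(3)] and g1ix = cx[OF g1(2)] and fjx = cx[OF fj]
  obtain S1 xa xb ea eb where S1: "bip X' Y S1 xa xb ea eb" using bip_ex O by blast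
  note b1 = bip_D[OF S1] and bs1 = bip_simps[OF S1]
  note O = O b1(1)
  define D where "D = i2 \<cdot> xa \<oplus> g1 \<cdot> xb"
  have Dh: "D \<in> Hom S1 Q" unfolding D_def using b1 iq g1 by (auto simp: hom_iff)
  have "pb p q D xb Y Z Q S1"
    unfolding pb_def
  proof (intro conjI allI impI)
    show "p \<in> Hom Y Z" "q \<in> Hom Q Z" "D \<in> Hom S1 Q" "xb \<in> Hom S1 Y" using ip iq Dh b1 by auto
    show "p \<cdot> xb = q \<cdot> D" unfolding D_def
      using b1(2-5) iq(2,3) g1(1) ip(3) qi2x g1x O by (simp add: hom_iff)
    fix W u v assume W: "W \<in> Ob" and u: "u \<in> Hom W Y" and v: "v \<in> Hom W Q" and e: "p \<cdot> u = q \<cdot> v"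
    have "q \<cdot> (v \<oplus> \<ominus>(g1 \<cdot> u)) = q \<cdot> v \<oplus> \<ominus>(p \<cdot> u)"
      using u v g1(1) iq(3) g1x by (simp add: hom_iff)
    also have "\<dots> = zr W Z" unfolding e using v iq(3) by (simp add: hom_iff)
    finally have "q \<cdot> (v \<oplus> \<ominus>(g1 \<cdot> u)) = zr W Z" .
    moreover have "v \<oplus> \<ominus>(g1 \<cdot> u) \<in> Hom W Q" using u v g1(1) by (auto simp: hom_iff)
    ultimately obtain a where a: "a \<in> Hom W X'" "i2 \<cdot> a = v \<oplus> \<ominus>(g1 \<cdot> u)" using kern_lift[OF kiq] by blast
    define w where "w = ea \<cdot> a \<oplus> eb \<cdot> u"
    have wh: "w \<in> Hom W S1" unfolding w_def using a u b1 by (auto simp: hom_iff)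
    have pbw: "xb \<cdot> w = u" unfolding w_def using a(1) u b1(2-5) bs1 W O by (simp add: hom_iff)
    have paw: "xa \<cdot> w = a" unfolding w_def using a(1) u b1(2-5) bs1 W O by (simp add: hom_iff)
    have Dw: "D \<cdot> w = i2 \<cdot> (xa \<cdot> w) \<oplus> g1 \<cdot> (xb \<cdot> w)" unfolding D_def
      using wh b1(2-5) iq(2) g1(1) by (simp add: hom_iff)
    have Dw2: "D \<cdot> w = v" unfolding Dw paw pbw a(2) using u v g1(1) by (simp add: hom_iff)
    show "\<exists>!w. w \<in> Hom W S1 \<and> xb \<cdot> w = u \<and> D \<cdot> w = v"
    proof (rule ex1I[of _ w])
      show "w \<in> Hom W S1 \<and> xb \<cdot> w = u \<and> D \<cdot> w = v" using wh pbw Dw2 by simp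
      fix w' assume w': "w' \<in> Hom W S1 \<and> xb \<cdot> w' = u \<and> D \<cdot> w' = v"
      have w'h: "w' \<in> Hom W S1" "xb \<cdot> w' = u" "D \<cdot> w' = v" using w' by auto
      have "D \<cdot> w' = i2 \<cdot> (xa \<cdot> w') \<oplus> g1 \<cdot> (xb \<cdot> w')" unfolding D_def
        using w'h(1) b1(2-5) iq(2) g1(1) by (simp add: hom_iff)
      then have "i2 \<cdot> (xa \<cdot> w') \<oplus> g1 \<cdot> u = v" using w'h by simp
      then have "i2 \<cdot> (xa \<cdot> w') = v \<oplus> \<ominus>(g1 \<cdot> u)"
        using eq_sub[of "i2 \<cdot> (xa \<cdot> w')" "g1 \<cdot> u" v] w'h(1) u v b1(2) iq(2) g1(1) by (simp add: hom_iff)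
      then have "xa \<cdot> w' = a" using kern_mono[OF kiq, of "xa \<cdot> w'" W a] a w'h(1) b1(2) by (simp add: hom_iff)
      then show "w' = w" using bip_eq_into[OF S1 w'h(1) wh] paw pbw w'h(2) by simp
    qed
  qed
  then have Ddef: "deflation C D" using pb_defl conf_defl[OF ip(1)] by blast
  obtain S2 qa qb fa fb where S2: "bip X Y S2 qa qb fa fb" using bip_ex O by blast
  note b2 = bip_D[OF S2] and bs2 = bip_simps[OF S2]
  note O = O b2(1)
  define mu where "mu = ea \<cdot> (f \<cdot> qa) \<oplus> eb \<cdot> (qb \<oplus> \<ominus>(i \<cdot> qa))"
  have muh: "mu \<in> Hom S2 S1" unfolding mu_def using b1 b2 jf(3) ip(2) by (auto simp: hom_iff)
  have "pb f xa mu qa X X' S1 S2"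
    unfolding pb_def
  proof (intro conjI allI impI)
    show "f \<in> Hom X X'" "xa \<in> Hom S1 X'" "mu \<in> Hom S2 S1" "qa \<in> Hom S2 X" using jf b1 b2 muh by auto
    show "f \<cdot> qa = xa \<cdot> mu" unfolding mu_def
      using b1(2-5) b2(2-5) jf(3) ip(2) bs1 O by (simp add: hom_iff)
    fix W u v assume W: "W \<in> Ob" and u: "u \<in> Hom W X" and v: "v \<in> Hom W S1" and e: "f \<cdot> u = xa \<cdot> v"
    define w where "w = fa \<cdot> u \<oplus> fb \<cdot> (xb \<cdot> v \<oplus> i \<cdot> u)"
    have wh: "w \<in> Hom W S2" unfolding w_def using u v b1 b2 ip(2) by (auto simp: hom_iff)
    have qaw: "qa \<cdot> w = u" unfolding w_def using u v b1(2-5) b2(2-5) ip(2) bs2 W O by (simp add: hom_iff)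
    have qbw: "qb \<cdot> w = xb \<cdot> v \<oplus> i \<cdot> u" unfolding w_def using u v b1(2-5) b2(2-5) ip(2) bs2 W O by (simp add: hom_iff)
    have muw: "mu \<cdot> w = ea \<cdot> (f \<cdot> (qa \<cdot> w)) \<oplus> eb \<cdot> (qb \<cdot> w \<oplus> \<ominus>(i \<cdot> (qa \<cdot> w)))" unfolding mu_def
      using wh b1(2-5) b2(2-5) ip(2) jf(3) by (simp add: hom_iff)
    have "mu \<cdot> w = ea \<cdot> (xa \<cdot> v) \<oplus> eb \<cdot> (xb \<cdot> v)" unfolding muw qaw qbw e[symmetric]
      using u v b1(2-5) ip(2) by (simp add: hom_iff)
    also have "\<dots> = v" using bip_decomp[OF S1 v] by simp
    finally have muw2: "mu \<cdot> w = v" .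
    show "\<exists>!w. w \<in> Hom W S2 \<and> qa \<cdot> w = u \<and> mu \<cdot> w = v"
    proof (rule ex1I[of _ w])
      show "w \<in> Hom W S2 \<and> qa \<cdot> w = u \<and> mu \<cdot> w = v" using wh qaw muw2 by simp
      fix w' assume w': "w' \<in> Hom W S2 \<and> qa \<cdot> w' = u \<and> mu \<cdot> w' = v"
      have w'h: "w' \<in> Hom W S2" "qa \<cdot> w' = u" "mu \<cdot> w' = v" using w' by auto
      have "xb \<cdot> (mu \<cdot> w') = qb \<cdot> w' \<oplus> \<ominus>(i \<cdot> (qa \<cdot> w'))" unfolding mu_def
        using w'h(1) b1(2-5) b2(2-5) ip(2) jf(3) bs1 O by (simp add: hom_iff)
      then have "qb \<cdot> w' \<oplus> \<ominus>(i \<cdot> u) = xb \<cdot> v" using w'h by simp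
      then have "qb \<cdot> w' = xb \<cdot> v \<oplus> i \<cdot> u"
        using eq_sub[of "qb \<cdot> w'" "\<ominus>(i \<cdot> u)" "xb \<cdot> v"] w'h(1) u v b1(3) b2(3) ip(2) by (simp add: hom_iff)
      then show "w' = w" using bip_eq_into[OF S2 w'h(1) wh] qaw qbw w'h(2) by simp
    qed
  qed
  then have mudef: "deflation C mu" using pb_defl conf_defl[OF jf(1)] by blast
  define d where "d = g1 \<cdot> qb"
  have dh: "d \<in> Hom S2 Q" unfolding d_def using g1 b2 by (auto simp: hom_iff)
  have "D \<cdot> mu = i2 \<cdot> (f \<cdot> qa) \<oplus> (g1 \<cdot> qb \<oplus> \<ominus>(g1 \<cdot> (i \<cdot> qa)))" unfolding D_def mu_def
    using b1(2-5) b2(2-5) ip(2) jf(3) iq(2) g1(1) bs1 O by (simp add: hom_iff)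
  also have "g1 \<cdot> (i \<cdot> qa) = i2 \<cdot> (f \<cdot> qa)" using g1ix b2(2-5) ip(2) jf(3) iq(2) g1(1) by (simp add: hom_iff)
  also have "i2 \<cdot> (f \<cdot> qa) \<oplus> (g1 \<cdot> qb \<oplus> \<ominus>(i2 \<cdot> (f \<cdot> qa))) = d" unfolding d_def
    using b2(2-5) jf(3) iq(2) g1(1) by (simp add: hom_iff)
  finally have Dmu: "D \<cdot> mu = d" .
  have ddef: "deflation C d" unfolding Dmu[symmetric] using R1[OF mudef Ddef] muh Dh by (simp add: hom_iff)
  obtain T ta tb ga gb where T: "bip X K T ta tb ga gb" using bip_ex O by blast
  note b3 = bip_D[OF T] and bs3 = bip_simps[OF T]
  note O = O b3(1)
  define k where "k = fa \<cdot> ta \<oplus> fb \<cdot> (i \<cdot> (j \<cdot> tb))"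
  have kh: "k \<in> Hom T S2" unfolding k_def using b2 b3 ip(2) jf(2) by (auto simp: hom_iff)
  have qbk: "qb \<cdot> k = i \<cdot> (j \<cdot> tb)" unfolding k_def using b2(2-5) b3(2-5) ip(2) jf(2) bs2 O by (simp add: hom_iff)
  have qak: "qa \<cdot> k = ta" unfolding k_def using b2(2-5) b3(2-5) ip(2) jf(2) bs2 O by (simp add: hom_iff)
  have kern_kd: "kern k d T S2 Q"
    unfolding kern_def
  proof (intro conjI allI impI)
    show "k \<in> Hom T S2" "d \<in> Hom S2 Q" using kh dh by auto
    have "d \<cdot> k = g1 \<cdot> (i \<cdot> (j \<cdot> tb))" unfolding d_def using qbk kh b2(3) g1(1) by (simp add: hom_iff)
    also have "\<dots> = i2 \<cdot> (f \<cdot> (j \<cdot> tb))" using g1ix b3(2-5) ip(2) jf(2,3) iq(2) g1(1) by (simp add: hom_iff)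
    also have "\<dots> = zr T Q" using fjx b3(2-5) jf(2,3) iq(2) O by (simp add: hom_iff)
    finally show "d \<cdot> k = zr T Q" .
    fix W t assume W: "W \<in> Ob" and t: "t \<in> Hom W S2" and dt: "d \<cdot> t = zr W Q"
    have qbt: "qb \<cdot> t \<in> Hom W Y" using t b2 by (auto simp: hom_iff)
    have "p \<cdot> (qb \<cdot> t) = q \<cdot> (g1 \<cdot> (qb \<cdot> t))" using g1x qbt g1(1) iq(3) by (simp add: hom_iff)
    also have "g1 \<cdot> (qb \<cdot> t) = zr W Q" using dt t b2(3) g1(1) unfolding d_def by (simp add: hom_iff)
    also have "q \<cdot> zr W Q = zr W Z" using iq(3) W by (simp add: hom_iff)
    finally obtain a where a: "a \<in> Hom W X" "i \<cdot> a = qb \<cdot> t" using kern_lift[OF kip qbt] by blast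
    have "i2 \<cdot> (f \<cdot> a) = g1 \<cdot> (i \<cdot> a)" using g1ix a(1) ip(2) jf(3) iq(2) g1(1) by (simp add: hom_iff)
    also have "\<dots> = zr W Q" unfolding a(2) using dt t b2(3) g1(1) unfolding d_def by (simp add: hom_iff)
    also have "\<dots> = i2 \<cdot> zr W X'" using iq(2) W by (simp add: hom_iff)
    finally have "f \<cdot> a = zr W X'" using kern_mono[OF kiq, of "f \<cdot> a" W "zr W X'"] a(1) jf(3) W O
      by (simp add: hom_iff)
    then obtain c where c: "c \<in> Hom W K" "j \<cdot> c = a" using kern_lift[OF kjf a(1)] by blast
    define w where "w = ga \<cdot> (qa \<cdot> t) \<oplus> gb \<cdot> c"
    have wh: "w \<in> Hom W T" unfolding w_def using c t b2 b3 by (auto simp: hom_iff)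
    have taw: "ta \<cdot> w = qa \<cdot> t" unfolding w_def using c(1) t b2(2-5) b3(2-5) bs3 W O by (simp add: hom_iff)
    have tbw: "tb \<cdot> w = c" unfolding w_def using c(1) t b2(2-5) b3(2-5) bs3 W O by (simp add: hom_iff)
    have "qa \<cdot> (k \<cdot> w) = qa \<cdot> t" using cx[OF qak] wh taw b2 b3 kh by (simp add: hom_iff)
    moreover have "qb \<cdot> (k \<cdot> w) = qb \<cdot> t"
    proof -
      have "qb \<cdot> (k \<cdot> w) = i \<cdot> (j \<cdot> (tb \<cdot> w))" using cx[OF qbk] wh b2 b3 kh ip(2) jf(2) by (simp add: hom_iff)
      also have "\<dots> = qb \<cdot> t" unfolding tbw c(2) a(2) ..
      finally show ?thesis .
    qed
    ultimately have kw: "k \<cdot> w = t" using bip_eq_into[OF S2, of "k \<cdot> w" W t] kh wh t by (auto simp: hom_iff)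
    show "\<exists>!w. w \<in> Hom W T \<and> k \<cdot> w = t"
    proof (rule ex1I[of _ w])
      show "w \<in> Hom W T \<and> k \<cdot> w = t" using wh kw by simp
      fix w' assume w': "w' \<in> Hom W T \<and> k \<cdot> w' = t"
      have w'h: "w' \<in> Hom W T" "k \<cdot> w' = t" using w' by auto
      have "ta \<cdot> w' = qa \<cdot> (k \<cdot> w')" using cx[OF qak] w'h(1) b2 b3 kh by (simp add: hom_iff)
      then have e1: "ta \<cdot> w' = ta \<cdot> w" using w'h(2) taw by simp
      have "i \<cdot> (j \<cdot> (tb \<cdot> w')) = qb \<cdot> (k \<cdot> w')" using cx[OF qbk] w'h(1) b2 b3 kh ip(2) jf(2) by (simp add: hom_iff)
      also have "\<dots> = i \<cdot> (j \<cdot> (tb \<cdot> w))" unfolding w'h(2) tbw c(2) a(2) ..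
      finally have "j \<cdot> (tb \<cdot> w') = j \<cdot> (tb \<cdot> w)"
        using kern_mono[OF kip, of "j \<cdot> (tb \<cdot> w')" W "j \<cdot> (tb \<cdot> w)"] w'h(1) wh b3 jf(2) by (simp add: hom_iff)
      then have "tb \<cdot> w' = tb \<cdot> w"
        using kern_mono[OF kjf, of "tb \<cdot> w'" W "tb \<cdot> w"] w'h(1) wh b3 by (simp add: hom_iff)
      then show "w' = w" using bip_eq_into[OF T w'h(1) wh] e1 by simp
    qed
  qed
  have kd: "(k, d) \<in> Conf" using kern_conf[OF ddef dh kern_kd] .
  have tbdef: "deflation C tb" using bip_defl2[OF T] .
  obtain P0 a' b' where P0: "po k tb a' b' T S2 K P0" "deflation C b'" "inflation C a'"
    using A3[OF conf_infl[OF kd] tbdef kh b3(3) KA] by blast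
  have ij: "i \<cdot> j \<in> Hom K Y" using ip(2) jf(2) by (auto simp: hom_iff)
  have po2: "po k tb (i \<cdot> j) qb T S2 K Y"
    unfolding po_def
  proof (intro conjI allI impI)
    show "k \<in> Hom T S2" "tb \<in> Hom T K" "i \<cdot> j \<in> Hom K Y" "qb \<in> Hom S2 Y" using kh b3 ij b2 by auto
    show "qb \<cdot> k = (i \<cdot> j) \<cdot> tb" unfolding qbk using ip(2) jf(2) b3 by (simp add: hom_iff)
    fix W u v assume W: "W \<in> Ob" and u: "u \<in> Hom S2 W" and v: "v \<in> Hom K W" and e: "u \<cdot> k = v \<cdot> tb"
    have kga: "k \<cdot> ga = fa" unfolding k_def using b2(2-5) b3(2-5) ip(2) jf(2) bs3 O by (simp add: hom_iff)
    have kgb: "k \<cdot> gb = fb \<cdot> (i \<cdot> j)" unfolding k_def using b2(2-5) b3(2-5) ip(2) jf(2) bs3 O by (simp add: hom_iff)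
    have "u \<cdot> fa = (u \<cdot> k) \<cdot> ga" unfolding kga[symmetric] using u kh b3 by (simp add: hom_iff)
    also have "\<dots> = v \<cdot> (tb \<cdot> ga)" unfolding e using v b3 by (simp add: hom_iff)
    also have "\<dots> = zr X W" using bs3 v O by (simp add: hom_iff)
    finally have ufa: "u \<cdot> fa = zr X W" .
    have ufb: "(u \<cdot> fb) \<cdot> (i \<cdot> j) = v"
    proof -
      have "(u \<cdot> fb) \<cdot> (i \<cdot> j) = u \<cdot> (k \<cdot> gb)" unfolding kgb using u b2 ij by (simp add: hom_iff)
      also have "\<dots> = (u \<cdot> k) \<cdot> gb" using u kh b3 by (simp add: hom_iff)
      also have "\<dots> = v \<cdot> (tb \<cdot> gb)" unfolding e using v b3 by (simp add: hom_iff)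
      also have "\<dots> = v" using bs3 v by (simp add: hom_iff)
      finally show ?thesis .
    qed
    have uq: "(u \<cdot> fb) \<cdot> qb = u"
    proof -
      have "u = u \<cdot> (fa \<cdot> qa) \<oplus> u \<cdot> (fb \<cdot> qb)" using bip_decomp_out[OF S2 u] .
      also have "u \<cdot> (fa \<cdot> qa) = zr S2 W" using cx[OF ufa, of qa] u b2 O W by (simp add: hom_iff)
      finally show ?thesis using u b2 W by (simp add: hom_iff)
    qed
    show "\<exists>!w. w \<in> Hom Y W \<and> w \<cdot> qb = u \<and> w \<cdot> (i \<cdot> j) = v"
    proof (rule ex1I[of _ "u \<cdot> fb"])
      show "u \<cdot> fb \<in> Hom Y W \<and> (u \<cdot> fb) \<cdot> qb = u \<and> (u \<cdot> fb) \<cdot> (i \<cdot> j) = v"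
        using u b2 uq ufb by (auto simp: hom_iff)
      fix w assume w: "w \<in> Hom Y W \<and> w \<cdot> qb = u \<and> w \<cdot> (i \<cdot> j) = v"
      have wh1: "w \<in> Hom Y W" "w \<cdot> qb = u" using w by auto
      have "w = (w \<cdot> qb) \<cdot> fb" using wh1(1) b2 bs2 by (simp add: hom_iff)
      then show "w = u \<cdot> fb" using wh1(2) by simp
    qed
  qed
  obtain phi psi where pp: "phi \<in> Hom P0 Y" "psi \<in> Hom Y P0" "psi \<cdot> phi = idn P0" "phi \<cdot> psi = idn Y"
    "phi \<cdot> a' = i \<cdot> j" using po_iso[OF P0(1) po2] by blast
  obtain ca where ca: "(a', ca) \<in> Conf" using P0(3) unfolding inflation_def by blast
  have a'h: "a' \<in> Hom K P0" using po_D[OF P0(1)] by blast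
  have cah: "ca \<in> Hom P0 (tg ca)" using conf_ty[OF ca] a'h by (auto simp: hom_iff)
  have "(phi \<cdot> a', ca \<cdot> psi) \<in> Conf" using conf_iso_mid[OF ca a'h cah pp(1,2,4,3)] .
  then have ijinf: "inflation C (i \<cdot> j)" unfolding pp(5) inflation_def by blast
  have cokd: "cok d k T S2 Q" using conf_D[OF kd kh dh] by blast
  have "cok g1 (i \<cdot> j) K Y Q"
    unfolding cok_def
  proof (intro conjI allI impI)
    show "i \<cdot> j \<in> Hom K Y" "g1 \<in> Hom Y Q" using ij g1 by auto
    have "g1 \<cdot> (i \<cdot> j) = i2 \<cdot> (f \<cdot> j)" using g1ix ip(2) jf(2,3) iq(2) g1(1) by (simp add: hom_iff)
    also have "\<dots> = zr K Q" unfolding fj using iq(2) O by (simp add: hom_iff)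
    finally show "g1 \<cdot> (i \<cdot> j) = zr K Q" .
    fix W t assume W: "W \<in> Ob" and t: "t \<in> Hom Y W" and tij: "t \<cdot> (i \<cdot> j) = zr K W"
    have tqb: "t \<cdot> qb \<in> Hom S2 W" using t b2 by (auto simp: hom_iff)
    have "(t \<cdot> qb) \<cdot> k = t \<cdot> (qb \<cdot> k)" using t b2 kh by (simp add: hom_iff)
    also have "\<dots> = t \<cdot> (i \<cdot> (j \<cdot> tb))" unfolding qbk ..
    also have "\<dots> = (t \<cdot> (i \<cdot> j)) \<cdot> tb" using t ip(2) jf(2) b3 by (simp add: hom_iff)
    also have "\<dots> = zr T W" unfolding tij using b3 W by (simp add: hom_iff)
    finally obtain u where u: "u \<in> Hom Q W" "u \<cdot> d = t \<cdot> qb" using cok_desc[OF cokd tqb] by blast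
    have ug: "u \<cdot> g1 = t"
    proof -
      have "u \<cdot> g1 = (u \<cdot> d) \<cdot> fb" unfolding d_def using u(1) g1(1) b2 bs2 by (simp add: hom_iff)
      also have "\<dots> = t" unfolding u(2) using t b2 bs2 by (simp add: hom_iff)
      finally show ?thesis .
    qed
    show "\<exists>!u. u \<in> Hom Q W \<and> u \<cdot> g1 = t"
    proof (rule ex1I[of _ u])
      show "u \<in> Hom Q W \<and> u \<cdot> g1 = t" using u ug by simp
      fix v assume v: "v \<in> Hom Q W \<and> v \<cdot> g1 = t"
      have vh: "v \<in> Hom Q W" "v \<cdot> g1 = t" using v by auto
      show "v = u"
      proof (rule cok_epi[OF cokd vh(1) u(1)])
        have "v \<cdot> d = (v \<cdot> g1) \<cdot> qb" unfolding d_def using vh(1) g1(1) b2 by (simp add: hom_iff)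
        then show "v \<cdot> d = u \<cdot> d" unfolding vh(2) u(2) .
      qed
    qed
  qed
  then show ?thesis using cok_conf[OF ijinf ij] by blast
qed

end


context dex
begin

lemma KL1:
  assumes ip: "(i, p) \<in> Conf" "i \<in> Hom X Y" "p \<in> Hom Y Z"
    and iq: "(i2, q) \<in> Conf" "i2 \<in> Hom X' Q" "q \<in> Hom Q Z"
    and fc: "(f, c) \<in> Conf" "f \<in> Hom X X'" "c \<in> Hom X' A0" and AA: "A0 \<in> A"
    and g1: "g1 \<in> Hom Y Q" "g1 \<cdot> i = i2 \<cdot> f" "q \<cdot> g1 = p"
  shows "\<exists>tau. tau \<in> Hom Q A0 \<and> (g1, tau) \<in> Conf"
proof -
  have O: "X \<in> Ob" "Y \<in> Ob" "Z \<in> Ob" "X' \<in> Ob" "Q \<in> Ob" "A0 \<in> Ob"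
    using ip iq fc by (auto simp: hom_iff)
  have kip: "kern i p X Y Z" "cok p i X Y Z" using conf_D[OF ip] by blast+
  have kfc: "kern f c X X' A0" using conf_D[OF fc] by blast
  have cf: "c \<cdot> f = zr X A0" using kfc unfolding kern_def by blast
  have pi0: "p \<cdot> i = zr X Z" using kip(1) unfolding kern_def by blast
  obtain P a' d pi where P: "po i2 c a' d X' Q A0 P" "deflation C d" "pi \<in> Hom P Z" "pi \<cdot> d = q"
     "pi \<cdot> a' = zr A0 Z" "(a', pi) \<in> Conf" "(i2 \<cdot> f, d) \<in> Conf"
    using PO_CONF[OF iq fc AA] by blast
  have h: "a' \<in> Hom A0 P" "d \<in> Hom Q P" "d \<cdot> i2 = a' \<cdot> c" using po_D[OF P(1)] by auto
  have PO: "P \<in> Ob" using h by (auto simp: hom_iff)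
  note O = O PO
  have ka': "kern a' pi A0 P Z" using conf_D[OF P(6) h(1) P(3)] by blast
  have dg1: "d \<cdot> g1 \<in> Hom Y P" using h g1 by (auto simp: hom_iff)
  have "(d \<cdot> g1) \<cdot> i = d \<cdot> (g1 \<cdot> i)" using h(2) g1(1) ip(2) by (simp add: hom_iff)
  also have "\<dots> = (d \<cdot> i2) \<cdot> f" unfolding g1(2) using h(2) iq(2) fc(2) by (simp add: hom_iff)
  also have "\<dots> = a' \<cdot> (c \<cdot> f)" unfolding h(3) using h(1) fc(2,3) by (simp add: hom_iff)
  also have "\<dots> = zr X P" unfolding cf using h(1) O by (simp add: hom_iff)
  finally obtain sg where sg: "sg \<in> Hom Z P" "sg \<cdot> p = d \<cdot> g1" using cok_desc[OF kip(2) dg1] by blast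
  have pisg: "pi \<cdot> sg = idn Z"
  proof (rule cok_epi[OF kip(2)])
    show "pi \<cdot> sg \<in> Hom Z Z" "idn Z \<in> Hom Z Z" using P(3) sg(1) O by (auto simp: hom_iff)
    have "(pi \<cdot> sg) \<cdot> p = pi \<cdot> (sg \<cdot> p)" using P(3) sg(1) ip(3) by (simp add: hom_iff)
    also have "\<dots> = (pi \<cdot> d) \<cdot> g1" unfolding sg(2) using P(3) h(2) g1(1) by (simp add: hom_iff)
    also have "\<dots> = p" unfolding P(4) g1(3) ..
    also have "\<dots> = idn Z \<cdot> p" using ip(3) by (simp add: hom_iff)
    finally show "(pi \<cdot> sg) \<cdot> p = idn Z \<cdot> p" .
  qed
  note pisgx = cx[OF pisg]
  define e where "e = idn P \<oplus> \<ominus>(sg \<cdot> pi)"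
  have eh: "e \<in> Hom P P" unfolding e_def using sg(1) P(3) PO by (auto simp: hom_iff)
  have "pi \<cdot> e = pi \<oplus> \<ominus>((pi \<cdot> sg) \<cdot> pi)" unfolding e_def using sg(1) P(3) PO by (simp add: hom_iff)
  also have "\<dots> = zr P Z" unfolding pisg using P(3) by (simp add: hom_iff)
  finally obtain rho where rho: "rho \<in> Hom P A0" "a' \<cdot> rho = e" using kern_lift[OF ka' eh] by blast
  note a'rx = cx[OF rho(2)]
  have rhoa: "rho \<cdot> a' = idn A0"
  proof (rule kern_mono[OF ka'])
    show "rho \<cdot> a' \<in> Hom A0 A0" "idn A0 \<in> Hom A0 A0" using rho(1) h(1) O by (auto simp: hom_iff)
    have "a' \<cdot> (rho \<cdot> a') = e \<cdot> a'" using a'rx h(1) rho(1) by (simp add: hom_iff)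
    also have "\<dots> = a' \<oplus> \<ominus>(sg \<cdot> (pi \<cdot> a'))" unfolding e_def using h(1) sg(1) P(3) PO by (simp add: hom_iff)
    also have "\<dots> = a' \<cdot> idn A0" unfolding P(5) using h(1) sg(1) O by (simp add: hom_iff)
    finally show "a' \<cdot> (rho \<cdot> a') = a' \<cdot> idn A0" .
  qed
  have rhosg: "rho \<cdot> sg = zr Z A0"
  proof (rule kern_mono[OF ka'])
    show "rho \<cdot> sg \<in> Hom Z A0" "zr Z A0 \<in> Hom Z A0" using rho(1) sg(1) O by (auto simp: hom_iff)
    have "a' \<cdot> (rho \<cdot> sg) = e \<cdot> sg" using a'rx sg(1) rho(1) h(1) by (simp add: hom_iff)
    also have "\<dots> = sg \<oplus> \<ominus>(sg \<cdot> (pi \<cdot> sg))" unfolding e_def using sg(1) P(3) PO by (simp add: hom_iff)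
    also have "\<dots> = a' \<cdot> zr Z A0" unfolding pisg using h(1) sg(1) O by (simp add: hom_iff)
    finally show "a' \<cdot> (rho \<cdot> sg) = a' \<cdot> zr Z A0" .
  qed
  have sum: "sg \<cdot> pi \<oplus> a' \<cdot> rho = idn P" unfolding rho(2) e_def using sg(1) P(3) PO by (simp add: hom_iff)
  have B: "bip Z A0 P pi rho sg a'"
    unfolding bip_def biproduct_def using PO P(3) rho(1) sg(1) h(1) pisg rhoa rhosg P(5) sum by auto
  have rhodef: "deflation C rho" using bip_defl2[OF B] .
  have ksg: "kern sg rho Z P A0" using bip_kern[OF B] .
  define tau where "tau = rho \<cdot> d"
  have tauh: "tau \<in> Hom Q A0" unfolding tau_def using rho(1) h(2) by (auto simp: hom_iff)
  have taudef: "deflation C tau" unfolding tau_def using R1[OF P(2) rhodef] rho(1) h(2) by (simp add: hom_iff)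
  obtain R r s where R: "pb d sg r s Q P Z R" "deflation C r" using R2[OF P(2) h(2) sg(1)] by blast
  have rs: "r \<in> Hom R Z" "s \<in> Hom R Q" "d \<cdot> s = sg \<cdot> r" using pb_D[OF R(1)] by auto
  have RO: "R \<in> Ob" using rs by (auto simp: hom_iff)
  note O = O RO
  have kst: "kern s tau R Q A0"
    unfolding kern_def
  proof (intro conjI allI impI)
    show "s \<in> Hom R Q" "tau \<in> Hom Q A0" using rs tauh by auto
    have "tau \<cdot> s = rho \<cdot> (d \<cdot> s)" unfolding tau_def using rho(1) h(2) rs(2) by (simp add: hom_iff)
    also have "\<dots> = (rho \<cdot> sg) \<cdot> r" unfolding rs(3) using rho(1) sg(1) rs(1) by (simp add: hom_iff)
    also have "\<dots> = zr R A0" unfolding rhosg using rs(1) O by (simp add: hom_iff)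
    finally show "tau \<cdot> s = zr R A0" .
    fix W t assume W: "W \<in> Ob" and t: "t \<in> Hom W Q" and tt: "tau \<cdot> t = zr W A0"
    have dt: "d \<cdot> t \<in> Hom W P" using h(2) t by (auto simp: hom_iff)
    have "rho \<cdot> (d \<cdot> t) = zr W A0" using tt rho(1) h(2) t unfolding tau_def by (simp add: hom_iff)
    then obtain v where v: "v \<in> Hom W Z" "sg \<cdot> v = d \<cdot> t" using kern_lift[OF ksg dt] by blast
    obtain w where w: "w \<in> Hom W R" "s \<cdot> w = t" "r \<cdot> w = v" using pb_lift[OF R(1) t v(1) v(2)[symmetric]] by blast
    show "\<exists>!w. w \<in> Hom W R \<and> s \<cdot> w = t"
    proof (rule ex1I[of _ w])
      show "w \<in> Hom W R \<and> s \<cdot> w = t" using w by simp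
      fix w' assume w': "w' \<in> Hom W R \<and> s \<cdot> w' = t"
      have w'h: "w' \<in> Hom W R" "s \<cdot> w' = t" using w' by auto
      have "sg \<cdot> (r \<cdot> w') = d \<cdot> (s \<cdot> w')" using cx[OF rs(3)[symmetric]] w'h(1) rs(1,2) sg(1) h(2) by (simp add: hom_iff)
      also have "\<dots> = d \<cdot> (s \<cdot> w)" unfolding w'h(2) w(2) ..
      also have "\<dots> = sg \<cdot> (r \<cdot> w)" using cx[OF rs(3)] w(1) rs(1,2) sg(1) h(2) by (simp add: hom_iff)
      finally have "r \<cdot> w' = r \<cdot> w"
        using kern_mono[OF ksg, of "r \<cdot> w'" W "r \<cdot> w"] w'h(1) w(1) rs(1) by (simp add: hom_iff)
      then show "w' = w" using pb_uniq[OF R(1) w'h(1) w(1)] w'h(2) w(2) by simp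
    qed
  qed
  have stau: "(s, tau) \<in> Conf" using kern_conf[OF taudef tauh kst] .
  have i2f: "i2 \<cdot> f \<in> Hom X Q" using iq(2) fc(2) by (auto simp: hom_iff)
  obtain kR where kR: "kR \<in> Hom X R" "s \<cdot> kR = i2 \<cdot> f" "r \<cdot> kR = zr X Z" "(kR, r) \<in> Conf"
    using pb_ker[OF P(7) i2f R] by blast
  obtain phi where phi: "phi \<in> Hom Y R" "s \<cdot> phi = g1" "r \<cdot> phi = p"
    using pb_lift[OF R(1) g1(1) ip(3) sg(2)[symmetric]] by blast
  have phii: "phi \<cdot> i = kR"
  proof (rule pb_uniq[OF R(1)])
    show "phi \<cdot> i \<in> Hom X R" "kR \<in> Hom X R" using phi(1) ip(2) kR(1) by (auto simp: hom_iff)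
    show "s \<cdot> (phi \<cdot> i) = s \<cdot> kR" unfolding kR(2) g1(2)[symmetric]
      using cx[OF phi(2)] phi(1) ip(2) rs(2) by (simp add: hom_iff)
    show "r \<cdot> (phi \<cdot> i) = r \<cdot> kR" unfolding kR(3) pi0[symmetric]
      using cx[OF phi(3)] phi(1) ip(2) rs(1) by (simp add: hom_iff)
  qed
  obtain psi where psi: "psi \<in> Hom R Y" "psi \<cdot> phi = idn Y" "phi \<cdot> psi = idn R"
    using FIVE[OF ip kR(4) kR(1) rs(1) phi(1) phii phi(3)] by blast
  have "(idn Q \<cdot> s \<cdot> phi, idn A0 \<cdot> tau \<cdot> idn Q) \<in> Conf"
    using conf_iso_simple[OF stau _ tauh phi(1) psi(1) psi(3) psi(2), of "idn Q" Q "idn Q" "idn A0" A0 "idn A0"]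
      rs(2) O by (simp add: hom_iff)
  then have "(g1, tau) \<in> Conf" using phi(1,2) rs(2) tauh g1(1) by (simp add: hom_iff)
  then show ?thesis using tauh by blast
qed

end


context dex
begin

lemma main_loc:
  assumes ip: "(i, p) \<in> Conf" and ip': "(i', p') \<in> Conf"
    and hi: "i \<in> Hom X Y" and hp: "p \<in> Hom Y Z"
    and hi': "i' \<in> Hom X' Y'" and hp': "p' \<in> Hom Y' Z'"
    and hf: "f \<in> Hom X X'" and hg: "g \<in> Hom Y Y'" and hh: "h \<in> Hom Z Z'"
    and c1: "g \<cdot> i = i' \<cdot> f" and c2: "h \<cdot> p = p' \<cdot> g"
  shows "(inflation C f \<and> inflation C h \<and> A_inflation C A f \<longrightarrow> inflation C g)
       \<and> (inflation C f \<and> inflation C h \<and> A_inflation C A f \<and> A_inflation C A h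
            \<longrightarrow> A_inflation C A g)
       \<and> (deflation C f \<and> deflation C h \<and> A_deflation C A f \<longrightarrow> deflation C g)
       \<and> (deflation C f \<and> deflation C h \<and> A_deflation C A f \<and> A_deflation C A h
            \<longrightarrow> A_deflation C A g)"
proof -
  have O: "X \<in> Ob" "Y \<in> Ob" "Z \<in> Ob" "X' \<in> Ob" "Y' \<in> Ob" "Z' \<in> Ob"
    using hi hp hi' hp' by (auto simp: hom_iff)
  have kip: "kern i p X Y Z" using conf_D[OF ip hi hp] by blast
  have pi0: "p \<cdot> i = zr X Z" using kip unfolding kern_def by blast
  have kip': "kern i' p' X' Y' Z'" using conf_D[OF ip' hi' hp'] by blast
  obtain Q q h' where Q: "pb p' h q h' Y' Z' Z Q" "deflation C q"
    using R2[OF conf_defl[OF ip'] hp' hh] by blast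
  have qh: "q \<in> Hom Q Z" "h' \<in> Hom Q Y'" "p' \<cdot> h' = h \<cdot> q" using pb_D[OF Q(1)] by auto
  have QO: "Q \<in> Ob" using qh by (auto simp: hom_iff)
  note O = O QO
  obtain i2 where i2: "i2 \<in> Hom X' Q" "h' \<cdot> i2 = i'" "q \<cdot> i2 = zr X' Z" "(i2, q) \<in> Conf"
    using pb_ker[OF ip' hi' Q] by blast
  obtain g1 where g1: "g1 \<in> Hom Y Q" "h' \<cdot> g1 = g" "q \<cdot> g1 = p"
    using pb_lift[OF Q(1) hg hp c2[symmetric]] by blast
  have g1i: "g1 \<cdot> i = i2 \<cdot> f"
  proof (rule pb_uniq[OF Q(1)])
    show "g1 \<cdot> i \<in> Hom X Q" "i2 \<cdot> f \<in> Hom X Q" using g1(1) hi i2(1) hf by (auto simp: hom_iff)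
    have "h' \<cdot> (g1 \<cdot> i) = g \<cdot> i" using cx[OF g1(2)] g1(1) hi qh(2) by (simp add: hom_iff)
    also have "\<dots> = h' \<cdot> (i2 \<cdot> f)" unfolding c1 using cx[OF i2(2)] i2(1) hf qh(2) by (simp add: hom_iff)
    finally show "h' \<cdot> (g1 \<cdot> i) = h' \<cdot> (i2 \<cdot> f)" .
    have "q \<cdot> (g1 \<cdot> i) = zr X Z" using cx[OF g1(3)] g1(1) hi qh(1) pi0 by (simp add: hom_iff)
    also have "\<dots> = q \<cdot> (i2 \<cdot> f)" using cx[OF i2(3)] i2(1) hf qh(1) O by (simp add: hom_iff)
    finally show "q \<cdot> (g1 \<cdot> i) = q \<cdot> (i2 \<cdot> f)" .
  qed
  have P1: "\<exists>d. (g, d) \<in> Conf \<and> (tg e \<in> A \<longrightarrow> tg d \<in> A)"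
    if fA: "A_inflation C A f" and he: "(h, e) \<in> Conf" for e
  proof -
    obtain c where c: "(f, c) \<in> Conf" "tg c \<in> A" using fA unfolding A_inflation_def by blast
    have ch: "c \<in> Hom X' (tg c)" using conf_ty[OF c(1)] hf by (auto simp: hom_iff)
    have eh: "e \<in> Hom Z' (tg e)" using conf_ty[OF he] hh by (auto simp: hom_iff)
    have khe: "kern h e Z Z' (tg e)" using conf_D[OF he hh eh] by blast
    have eh0: "e \<cdot> h = zr Z (tg e)" using khe unfolding kern_def by blast
    have WO: "tg e \<in> Ob" using eh by (auto simp: hom_iff)
    have ep: "e \<cdot> p' \<in> Hom Y' (tg e)" using eh hp' by (auto simp: hom_iff)
    have kh': "kern h' (e \<cdot> p') Q Y' (tg e)"
      unfolding kern_def
    proof (intro conjI allI impI)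
      show "h' \<in> Hom Q Y'" "e \<cdot> p' \<in> Hom Y' (tg e)" using qh ep by auto
      have "(e \<cdot> p') \<cdot> h' = e \<cdot> (h \<cdot> q)" unfolding qh(3)[symmetric] using eh hp' qh(2) by (simp add: hom_iff)
      also have "\<dots> = zr Q (tg e)" using cx[OF eh0] qh(1) hh eh O WO by (simp add: hom_iff)
      finally show "(e \<cdot> p') \<cdot> h' = zr Q (tg e)" .
      fix V t assume V: "V \<in> Ob" and t: "t \<in> Hom V Y'" and et: "(e \<cdot> p') \<cdot> t = zr V (tg e)"
      have pt: "p' \<cdot> t \<in> Hom V Z'" using hp' t by (auto simp: hom_iff)
      have "e \<cdot> (p' \<cdot> t) = zr V (tg e)" using et eh hp' t by (simp add: hom_iff)
      then obtain v where v: "v \<in> Hom V Z" "h \<cdot> v = p' \<cdot> t" using kern_lift[OF khe pt] by blast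
      obtain w where w: "w \<in> Hom V Q" "h' \<cdot> w = t" "q \<cdot> w = v" using pb_lift[OF Q(1) t v(1) v(2)[symmetric]] by blast
      show "\<exists>!w. w \<in> Hom V Q \<and> h' \<cdot> w = t"
      proof (rule ex1I[of _ w])
        show "w \<in> Hom V Q \<and> h' \<cdot> w = t" using w by simp
        fix w' assume w': "w' \<in> Hom V Q \<and> h' \<cdot> w' = t"
        have w'h: "w' \<in> Hom V Q" "h' \<cdot> w' = t" using w' by auto
        have "h \<cdot> (q \<cdot> w') = p' \<cdot> (h' \<cdot> w')" using cx[OF qh(3)[symmetric]] w'h(1) qh(1,2) hh hp' by (simp add: hom_iff)
        also have "\<dots> = p' \<cdot> (h' \<cdot> w)" unfolding w'h(2) w(2) ..
        also have "\<dots> = h \<cdot> (q \<cdot> w)" using cx[OF qh(3)] w(1) qh(1,2) hh hp' by (simp add: hom_iff)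
        finally have "q \<cdot> w' = q \<cdot> w"
          using kern_mono[OF khe, of "q \<cdot> w'" V "q \<cdot> w"] w'h(1) w(1) qh(1) by (simp add: hom_iff)
        then show "w' = w" using pb_uniq[OF Q(1) w'h(1) w(1)] w'h(2) w(2) by simp
      qed
    qed
    have epdef: "deflation C (e \<cdot> p')" using R1[OF conf_defl[OF ip'] conf_defl[OF he]] hp' eh by (simp add: hom_iff)
    have h'e: "(h', e \<cdot> p') \<in> Conf" using kern_conf[OF epdef ep kh'] .
    obtain tau where tau: "tau \<in> Hom Q (tg c)" "(g1, tau) \<in> Conf"
      using KL1[OF ip hi hp i2(4) i2(1) qh(1) c(1) hf ch c(2) g1(1) g1i g1(3)] by blast
    obtain P2 a2 d2 pi2 where P2: "po h' tau a2 d2 Q Y' (tg c) P2" "deflation C d2" "pi2 \<in> Hom P2 (tg e)"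
      "(a2, pi2) \<in> Conf" "(h' \<cdot> g1, d2) \<in> Conf"
      using PO_CONF[OF h'e qh(2) ep tau(2) g1(1) tau(1) c(2)] by blast
    have a2h: "a2 \<in> Hom (tg c) P2" "d2 \<in> Hom Y' P2" using po_D[OF P2(1)] by auto
    have "tg e \<in> A \<longrightarrow> tg a2 \<in> A" using A1[OF P2(4)] a2h P2(3) c(2) by (auto simp: hom_iff)
    then have "tg e \<in> A \<longrightarrow> tg d2 \<in> A" using a2h by (auto simp: hom_iff)
    then show ?thesis using P2(5) g1(2) by auto
  qed
  have part1: "inflation C f \<and> inflation C h \<and> A_inflation C A f \<longrightarrow> inflation C g"
  proof
    assume a: "inflation C f \<and> inflation C h \<and> A_inflation C A f"
    then obtain e where "(h, e) \<in> Conf" unfolding inflation_def by blast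
    then show "inflation C g" using P1 a unfolding inflation_def by blast
  qed
  have part2: "inflation C f \<and> inflation C h \<and> A_inflation C A f \<and> A_inflation C A h
            \<longrightarrow> A_inflation C A g"
  proof
    assume a: "inflation C f \<and> inflation C h \<and> A_inflation C A f \<and> A_inflation C A h"
    then obtain e where "(h, e) \<in> Conf" "tg e \<in> A" unfolding A_inflation_def by blast
    then show "A_inflation C A g" using P1 a unfolding A_inflation_def by blast
  qed
  have P3: "deflation C g \<and> (A_deflation C A h \<longrightarrow> A_deflation C A g)"
    if fA: "A_deflation C A f" and hd: "deflation C h"
  proof -
    obtain j where j: "(j, f) \<in> Conf" "sr j \<in> A" using fA unfolding A_deflation_def by blast
    have jh: "j \<in> Hom (sr j) X" using conf_ty[OF j(1)] hf by (auto simp: hom_iff)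
    have Qs: "pb h p' h' q Z Z' Y' Q" using pb_swap[OF Q(1)] .
    have h'd: "deflation C h'" using pb_defl[OF Qs hd] .
    have ijg: "(i \<cdot> j, g1) \<in> Conf"
      using KL2[OF ip hi hp i2(4) i2(1) qh(1) j(1) jh hf j(2) g1(1) g1i g1(3)] .
    have gd: "deflation C g" using R1[OF conf_defl[OF ijg] h'd] g1(1,2) qh(2) by (simp add: hom_iff)
    have "A_deflation C A g" if hA: "A_deflation C A h"
    proof -
      obtain l where l: "(l, h) \<in> Conf" "sr l \<in> A" using hA unfolding A_deflation_def by blast
      define L where "L = sr l"
      have lh: "l \<in> Hom L Z" using conf_ty[OF l(1)] hh L_def by (auto simp: hom_iff)
      obtain l' where l': "l' \<in> Hom L Q" "q \<cdot> l' = l" "h' \<cdot> l' = zr L Y'" "(l', h') \<in> Conf"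
        using pb_ker[OF l(1) lh Qs h'd] by blast
      have kl': "kern l' h' L Q Y'" using conf_D[OF l'(4) l'(1) qh(2)] by blast
      obtain m where m: "(m, g) \<in> Conf" using gd unfolding deflation_def by blast
      define M where "M = sr m"
      have mh: "m \<in> Hom M Y" using conf_ty[OF m] hg M_def by (auto simp: hom_iff)
      have kmg: "kern m g M Y Y'" using conf_D[OF m mh hg] by blast
      have gm0: "g \<cdot> m = zr M Y'" using kmg unfolding kern_def by blast
      have kijg: "kern (i \<cdot> j) g1 (sr j) Y Q" using conf_D[OF ijg _ g1(1)] hi jh by (auto simp: hom_iff)
      have g1ij: "g1 \<cdot> (i \<cdot> j) = zr (sr j) Q" using kijg unfolding kern_def by blast
      have LO: "L \<in> Ob" "M \<in> Ob" "sr j \<in> Ob" using lh mh jh by (auto simp: hom_iff)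
      have g1m: "g1 \<cdot> m \<in> Hom M Q" using g1(1) mh by (auto simp: hom_iff)
      have "h' \<cdot> (g1 \<cdot> m) = zr M Y'" using cx[OF g1(2)] gm0 mh g1(1) qh(2) by (simp add: hom_iff)
      then obtain r where r: "r \<in> Hom M L" "l' \<cdot> r = g1 \<cdot> m" using kern_lift[OF kl' g1m] by blast
      have pbr: "pb g1 l' r m Y Q L M"
        unfolding pb_def
      proof (intro conjI allI impI)
        show "g1 \<in> Hom Y Q" "l' \<in> Hom L Q" "r \<in> Hom M L" "m \<in> Hom M Y" using g1 l' r mh by auto
        show "g1 \<cdot> m = l' \<cdot> r" using r by simp
        fix V u v assume V: "V \<in> Ob" and u: "u \<in> Hom V Y" and v: "v \<in> Hom V L" and e: "g1 \<cdot> u = l' \<cdot> v"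
        have "g \<cdot> u = h' \<cdot> (g1 \<cdot> u)" using cx[OF g1(2)] u g1(1) qh(2) by (simp add: hom_iff)
        also have "\<dots> = zr V Y'" unfolding e using cx[OF l'(3)] v l'(1) qh(2) O by (simp add: hom_iff)
        finally obtain w where w: "w \<in> Hom V M" "m \<cdot> w = u" using kern_lift[OF kmg u] by blast
        have rw: "r \<cdot> w = v"
        proof (rule kern_mono[OF kl'])
          show "r \<cdot> w \<in> Hom V L" "v \<in> Hom V L" using r w v by (auto simp: hom_iff)
          have "l' \<cdot> (r \<cdot> w) = g1 \<cdot> (m \<cdot> w)" using cx[OF r(2)] w(1) r(1) l'(1) g1(1) mh by (simp add: hom_iff)
          then show "l' \<cdot> (r \<cdot> w) = l' \<cdot> v" unfolding w(2) e .
        qed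
        show "\<exists>!w. w \<in> Hom V M \<and> m \<cdot> w = u \<and> r \<cdot> w = v"
        proof (rule ex1I[of _ w])
          show "w \<in> Hom V M \<and> m \<cdot> w = u \<and> r \<cdot> w = v" using w rw by simp
          fix w' assume w': "w' \<in> Hom V M \<and> m \<cdot> w' = u \<and> r \<cdot> w' = v"
          then show "w' = w" using kern_mono[OF kmg, of w' V w] w by auto
        qed
      qed
      have rd: "deflation C r" using pb_defl[OF pbr conf_defl[OF ijg]] .
      have ij: "i \<cdot> j \<in> Hom (sr j) Y" using hi jh by (auto simp: hom_iff)
      have "g \<cdot> (i \<cdot> j) = h' \<cdot> (g1 \<cdot> (i \<cdot> j))" using cx[OF g1(2)] ij g1(1) qh(2) by (simp add: hom_iff)
      also have "\<dots> = zr (sr j) Y'" unfolding g1ij using qh(2) LO by (simp add: hom_iff)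
      finally obtain s where s: "s \<in> Hom (sr j) M" "m \<cdot> s = i \<cdot> j" using kern_lift[OF kmg ij] by blast
      have ksr: "kern s r (sr j) M L"
        unfolding kern_def
      proof (intro conjI allI impI)
        show "s \<in> Hom (sr j) M" "r \<in> Hom M L" using s r by auto
        show "r \<cdot> s = zr (sr j) L"
        proof (rule kern_mono[OF kl'])
          show "r \<cdot> s \<in> Hom (sr j) L" "zr (sr j) L \<in> Hom (sr j) L" using r s LO by (auto simp: hom_iff)
          have "l' \<cdot> (r \<cdot> s) = g1 \<cdot> (m \<cdot> s)" using cx[OF r(2)] s(1) r(1) l'(1) g1(1) mh by (simp add: hom_iff)
          also have "\<dots> = zr (sr j) Q" unfolding s(2) g1ij ..
          also have "\<dots> = l' \<cdot> zr (sr j) L" using l'(1) LO by (simp add: hom_iff)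
          finally show "l' \<cdot> (r \<cdot> s) = l' \<cdot> zr (sr j) L" .
        qed
        fix V t assume V: "V \<in> Ob" and t: "t \<in> Hom V M" and rt: "r \<cdot> t = zr V L"
        have mt: "m \<cdot> t \<in> Hom V Y" using mh t by (auto simp: hom_iff)
        have "g1 \<cdot> (m \<cdot> t) = l' \<cdot> (r \<cdot> t)" using cx[OF r(2)[symmetric]] t r(1) l'(1) g1(1) mh by (simp add: hom_iff)
        also have "\<dots> = zr V Q" unfolding rt using l'(1) V by (simp add: hom_iff)
        finally obtain u where u: "u \<in> Hom V (sr j)" "(i \<cdot> j) \<cdot> u = m \<cdot> t" using kern_lift[OF kijg mt] by blast
        have su: "s \<cdot> u = t"
        proof (rule kern_mono[OF kmg])
          show "s \<cdot> u \<in> Hom V M" "t \<in> Hom V M" using s u t by (auto simp: hom_iff)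
          have "m \<cdot> (s \<cdot> u) = (i \<cdot> j) \<cdot> u" using cx[OF s(2)] s(1) u(1) mh hi jh by (simp add: hom_iff)
          then show "m \<cdot> (s \<cdot> u) = m \<cdot> t" unfolding u(2) .
        qed
        show "\<exists>!u. u \<in> Hom V (sr j) \<and> s \<cdot> u = t"
        proof (rule ex1I[of _ u])
          show "u \<in> Hom V (sr j) \<and> s \<cdot> u = t" using u su by simp
          fix u' assume u': "u' \<in> Hom V (sr j) \<and> s \<cdot> u' = t"
          have u'h: "u' \<in> Hom V (sr j)" "s \<cdot> u' = t" using u' by auto
          have "(i \<cdot> j) \<cdot> u' = m \<cdot> (s \<cdot> u')" using cx[OF s(2)] s(1) u'h(1) mh hi jh by (simp add: hom_iff)
          also have "\<dots> = (i \<cdot> j) \<cdot> u" unfolding u'h(2) su[symmetric] using cx[OF s(2)] s(1) u(1) mh hi jh by (simp add: hom_iff)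
          finally show "u' = u" using kern_mono[OF kijg u'h(1) u(1)] by blast
        qed
      qed
      have sr: "(s, r) \<in> Conf" using kern_conf[OF rd r(1) ksr] .
      have "tg s \<in> A" using A1[OF sr] j(2) l(2) s r L_def by (auto simp: hom_iff)
      then have "sr m \<in> A" using s M_def by (auto simp: hom_iff)
      then show ?thesis unfolding A_deflation_def using m by blast
    qed
    then show ?thesis using gd by blast
  qed
  have part3: "deflation C f \<and> deflation C h \<and> A_deflation C A f \<longrightarrow> deflation C g"
    using P3 by blast
  have part4: "deflation C f \<and> deflation C h \<and> A_deflation C A f \<and> A_deflation C A h
            \<longrightarrow> A_deflation C A g"
    using P3 by blast
  show ?thesis using part1 part2 part3 part4 by blast
qed

end

theorem mainTheorem13:
  fixes C :: "('o,'m) ccat" and A :: "'o set"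
    and X Y Z X' Y' Z' :: 'o and i p i' p' f g h :: 'm
  assumes "deflation_exact C"
    and "admissibly_deflation_percolating C A"
    and "(i, p) \<in> conflations C" and "(i', p') \<in> conflations C"
    and "i \<in> hom C X Y" and "p \<in> hom C Y Z"
    and "i' \<in> hom C X' Y'" and "p' \<in> hom C Y' Z'"
    and "f \<in> hom C X X'" and "g \<in> hom C Y Y'" and "h \<in> hom C Z Z'"
    and "cmp C g i = cmp C i' f" and "cmp C h p = cmp C p' g"
  shows "(inflation C f \<and> inflation C h \<and> A_inflation C A f \<longrightarrow> inflation C g)
       \<and> (inflation C f \<and> inflation C h \<and> A_inflation C A f \<and> A_inflation C A h
            \<longrightarrow> A_inflation C A g)
       \<and> (deflation C f \<and> deflation C h \<and> A_deflation C A f \<longrightarrow> deflation C g)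
       \<and> (deflation C f \<and> deflation C h \<and> A_deflation C A f \<and> A_deflation C A h
            \<longrightarrow> A_deflation C A g)"
proof -
  interpret dex C A using assms(1,2) by unfold_locales
  show ?thesis using main_loc[OF assms(3-13)] .
qed

end
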